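(* Let $\mathcal{B}\models I\Sigma_1$ and $\mathcal{A}\subseteq\mathcal{B}$ an $L$-substructure with universe $A$. For $y,z\in A$ write $y\sim z$ if $|y-z|\in\mathbb{N}$ (standard). Let $\mathcal{O}$ be a $\langle 0,+,\dot{-},\cdot\rangle$-substructure of $\mathcal{A}$ such that every $\sim$-class of $A$ contains exactly one element of $\mathcal{O}$, denoted $O_y$ for $y$ in that class, and let $\varepsilon:\mathcal{O}\to M^{good}_{\mathbb{P}}(\mathcal{B})$ be a $\langle 0,+,\dot{-},\cdot\rangle$-homomorphism such that every diagonal entry $\varepsilon(Q)_{pp}$ with $0\neq Q\in\mathcal{O}$ is nonstandard. Define, for $y\in A$, $\varepsilon(y)=\varepsilon(O_y)+\delta_y I$, where $\delta_y=y-O_y\in\mathbb{Z}$ and $I$ is the identity matrix. Then $\varepsilon: A\to M^{good}_{\mathbb{P}}(\mathcal{B})$ is a semiring homomorphism.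
   Context: $L=\langle0,1,+,\cdot,\le\rangle$. $a\dot{-}b = a-b$ if $a\ge b$ and $0$ otherwise. $\mathbb{P}$ is the set of primes of $\mathcal{B}$. A $\mathbb{P}\times\mathbb{P}$-matrix $M$ over $B$ is good in $\mathcal{B}$ if for every $J\in B$ the set $\{(p,q,M_{pq}): q<J, M_{pq}\neq0\}$ is coded in $\mathcal{B}$ (via Gödel coding of finite sets in $I\Sigma_1$); $M^{good}_{\mathbb{P}}(\mathcal{B})$ is the semiring of such matrices with matrix addition and multiplication computed in $\mathcal{B}$. A semiring homomorphism preserves $0,1,+,\cdot$. *)

theory Defs
  imports Main
begin

record 'b Lstr =
  zer :: 'b
  on  :: 'b
  ad  :: "'b \<Rightarrow> 'b \<Rightarrow> 'b"
  mu  :: "'b \<Rightarrow> 'b \<Rightarrow> 'b"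
  le  :: "'b \<Rightarrow> 'b \<Rightarrow> bool"

text \<open>The universe of the structure B is the whole type 'b.\<close>

definition lt :: "'b Lstr \<Rightarrow> 'b \<Rightarrow> 'b \<Rightarrow> bool" where
  "lt B x y \<longleftrightarrow> le B x y \<and> x \<noteq> y"

datatype trm = Var nat | Zero | One | Plus trm trm | Times trm trm

datatype fm =
    Eq trm trm | Leq trm trm | Neg fm | Conj fm fm | Disj fm fm
  | Ex nat fm
  | BAll nat trm fm
  | BEx nat trm fm

fun evt :: "'b Lstr \<Rightarrow> (nat \<Rightarrow> 'b) \<Rightarrow> trm \<Rightarrow> 'b" where
  "evt B e (Var i) = e i"
| "evt B e Zero = zer B"
| "evt B e One = on B"
| "evt B e (Plus s t) = ad B (evt B e s) (evt B e t)"
| "evt B e (Times s t) = mu B (evt B e s) (evt B e t)"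

fun sat :: "'b Lstr \<Rightarrow> (nat \<Rightarrow> 'b) \<Rightarrow> fm \<Rightarrow> bool" where
  "sat B e (Eq s t) = (evt B e s = evt B e t)"
| "sat B e (Leq s t) = le B (evt B e s) (evt B e t)"
| "sat B e (Neg \<phi>) = (\<not> sat B e \<phi>)"
| "sat B e (Conj \<phi> \<psi>) = (sat B e \<phi> \<and> sat B e \<psi>)"
| "sat B e (Disj \<phi> \<psi>) = (sat B e \<phi> \<or> sat B e \<psi>)"
| "sat B e (Ex x \<phi>) = (\<exists>v. sat B (e(x := v)) \<phi>)"
| "sat B e (BAll x t \<phi>) = (\<forall>v. le B v (evt B e t) \<longrightarrow> sat B (e(x := v)) \<phi>)"
| "sat B e (BEx x t \<phi>) = (\<exists>v. le B v (evt B e t) \<and> sat B (e(x := v)) \<phi>)"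

fun delta0 :: "fm \<Rightarrow> bool" where
  "delta0 (Eq s t) = True"
| "delta0 (Leq s t) = True"
| "delta0 (Neg \<phi>) = delta0 \<phi>"
| "delta0 (Conj \<phi> \<psi>) = (delta0 \<phi> \<and> delta0 \<psi>)"
| "delta0 (Disj \<phi> \<psi>) = (delta0 \<phi> \<and> delta0 \<psi>)"
| "delta0 (Ex x \<phi>) = False"
| "delta0 (BAll x t \<phi>) = delta0 \<phi>"
| "delta0 (BEx x t \<phi>) = delta0 \<phi>"

inductive sigma1 :: "fm \<Rightarrow> bool" where
  "delta0 \<phi> \<Longrightarrow> sigma1 \<phi>"
| "sigma1 \<phi> \<Longrightarrow> sigma1 (Ex x \<phi>)"

definition PAminus :: "'b Lstr \<Rightarrow> bool" where
  "PAminus B \<longleftrightarrow>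
    (\<forall>x y z. ad B x (ad B y z) = ad B (ad B x y) z) \<and>
    (\<forall>x y. ad B x y = ad B y x) \<and>
    (\<forall>x y z. mu B x (mu B y z) = mu B (mu B x y) z) \<and>
    (\<forall>x y. mu B x y = mu B y x) \<and>
    (\<forall>x y z. mu B x (ad B y z) = ad B (mu B x y) (mu B x z)) \<and>
    (\<forall>x. ad B x (zer B) = x) \<and>
    (\<forall>x. mu B x (zer B) = zer B) \<and>
    (\<forall>x. mu B x (on B) = x) \<and>
    (\<forall>x. le B x x) \<and>
    (\<forall>x y. le B x y \<and> le B y x \<longrightarrow> x = y) \<and>
    (\<forall>x y z. le B x y \<and> le B y z \<longrightarrow> le B x z) \<and>
    (\<forall>x y. le B x y \<or> le B y x) \<and>
    (\<forall>x y z. le B x y \<longrightarrow> le B (ad B x z) (ad B y z)) \<and>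
    (\<forall>x y z. lt B (zer B) z \<and> lt B x y \<longrightarrow> lt B (mu B x z) (mu B y z)) \<and>
    (\<forall>x y. le B x y \<longrightarrow> (\<exists>z. ad B x z = y)) \<and>
    lt B (zer B) (on B) \<and>
    (\<forall>x. le B (zer B) x) \<and>
    (\<forall>x. lt B (zer B) x \<longrightarrow> le B (on B) x)"

definition ISigma1 :: "'b Lstr \<Rightarrow> bool" where
  "ISigma1 B \<longleftrightarrow> PAminus B \<and>
    (\<forall>\<phi> x e. sigma1 \<phi> \<longrightarrow>
       sat B (e(x := zer B)) \<phi> \<longrightarrow>
       (\<forall>v. sat B (e(x := v)) \<phi> \<longrightarrow> sat B (e(x := ad B v (on B))) \<phi>) \<longrightarrow>
       (\<forall>v. sat B (e(x := v)) \<phi>))"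

definition substr :: "'b Lstr \<Rightarrow> 'b set \<Rightarrow> bool" where
  "substr B A \<longleftrightarrow> zer B \<in> A \<and> on B \<in> A \<and>
     (\<forall>x\<in>A. \<forall>y\<in>A. ad B x y \<in> A \<and> mu B x y \<in> A)"

definition num :: "'b Lstr \<Rightarrow> nat \<Rightarrow> 'b" where
  "num B n = ((\<lambda>x. ad B x (on B)) ^^ n) (zer B)"

definition standard :: "'b Lstr \<Rightarrow> 'b \<Rightarrow> bool" where
  "standard B x \<longleftrightarrow> (\<exists>n. x = num B n)"

definition simB :: "'b Lstr \<Rightarrow> 'b \<Rightarrow> 'b \<Rightarrow> bool" where
  "simB B y z \<longleftrightarrow> (\<exists>n. y = ad B z (num B n) \<or> z = ad B y (num B n))"

definition monus :: "'b Lstr \<Rightarrow> 'b \<Rightarrow> 'b \<Rightarrow> 'b" where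
  "monus B x y = (if le B y x then (THE d. ad B y d = x) else zer B)"

definition modB :: "'b Lstr \<Rightarrow> 'b \<Rightarrow> 'b \<Rightarrow> 'b" where
  "modB B a m = (THE r. lt B r m \<and> (\<exists>q. a = ad B (mu B q m) r))"

definition beta :: "'b Lstr \<Rightarrow> 'b \<Rightarrow> 'b \<Rightarrow> 'b \<Rightarrow> 'b" where
  "beta B a c i = modB B a (ad B (on B) (mu B (ad B i (on B)) c))"

definition coded :: "'b Lstr \<Rightarrow> 'b set \<Rightarrow> bool" where
  "coded B S \<longleftrightarrow> (\<exists>a c n. S = {x. \<exists>i. lt B i n \<and> x = beta B a c i})"

definition cpair :: "'b Lstr \<Rightarrow> 'b \<Rightarrow> 'b \<Rightarrow> 'b" where
  "cpair B x y = (THE z. ad B z z =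
      ad B (mu B (ad B x y) (ad B (ad B x y) (on B))) (ad B y y))"

definition triple :: "'b Lstr \<Rightarrow> 'b \<Rightarrow> 'b \<Rightarrow> 'b \<Rightarrow> 'b" where
  "triple B x y z = cpair B x (cpair B y z)"

definition primeB :: "'b Lstr \<Rightarrow> 'b \<Rightarrow> bool" where
  "primeB B p \<longleftrightarrow> lt B (on B) p \<and> (\<forall>d e. mu B d e = p \<longrightarrow> d = on B \<or> d = p)"

text \<open>A P x P matrix is represented as a function 'b => 'b => 'b whose entries
  outside P x P are 0 (canonical representative).\<close>

type_synonym 'b mat = "'b \<Rightarrow> 'b \<Rightarrow> 'b"

definition good :: "'b Lstr \<Rightarrow> 'b mat \<Rightarrow> bool" where
  "good B M \<longleftrightarrow>
     (\<forall>p q. \<not> (primeB B p \<and> primeB B q) \<longrightarrow> M p q = zer B) \<and>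
     (\<forall>J. coded B {triple B p q (M p q) | p q.
                    primeB B p \<and> primeB B q \<and> lt B q J \<and> M p q \<noteq> zer B})"

definition mzero :: "'b Lstr \<Rightarrow> 'b mat" where
  "mzero B = (\<lambda>p q. zer B)"

definition mid :: "'b Lstr \<Rightarrow> 'b mat" where
  "mid B = (\<lambda>p q. if primeB B p \<and> p = q then on B else zer B)"

definition madd :: "'b Lstr \<Rightarrow> 'b mat \<Rightarrow> 'b mat \<Rightarrow> 'b mat" where
  "madd B M N = (\<lambda>p q. ad B (M p q) (N p q))"

definition mmonus :: "'b Lstr \<Rightarrow> 'b mat \<Rightarrow> 'b mat \<Rightarrow> 'b mat" where
  "mmonus B M N = (\<lambda>p q. monus B (M p q) (N p q))"

text \<open>Internal sum in B: s = sum_{i<K} g(i), witnessed by a beta-coded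
  sequence of partial sums.\<close>
definition bsum :: "'b Lstr \<Rightarrow> ('b \<Rightarrow> 'b) \<Rightarrow> 'b \<Rightarrow> 'b \<Rightarrow> bool" where
  "bsum B g K s \<longleftrightarrow> (\<exists>a c. beta B a c (zer B) = zer B \<and>
      (\<forall>i. lt B i K \<longrightarrow> beta B a c (ad B i (on B)) = ad B (beta B a c i) (g i)) \<and>
      beta B a c K = s)"

text \<open>Matrix product computed in B: (MN)_{pq} = sum over primes r of M_{pr} N_{rq},
  an internal (B-finite) sum since column q of N has B-finite support.\<close>
definition mmul :: "'b Lstr \<Rightarrow> 'b mat \<Rightarrow> 'b mat \<Rightarrow> 'b mat" where
  "mmul B M N = (\<lambda>p q. if primeB B p \<and> primeB B q then
      (THE s. \<exists>K. (\<forall>r. N r q \<noteq> zer B \<longrightarrow> lt B r K) \<and>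
          bsum B (\<lambda>r. if primeB B r then mu B (M p r) (N r q) else zer B) K s)
     else zer B)"

definition Oof :: "'b Lstr \<Rightarrow> 'b set \<Rightarrow> 'b \<Rightarrow> 'b" where
  "Oof B Os y = (THE w. w \<in> Os \<and> simB B y w)"

text \<open>eps(y) = eps(O_y) + delta_y I with delta_y = y - O_y an integer:
  on the diagonal add (y - O_y) if O_y <= y, subtract (O_y - y) otherwise.\<close>
definition ext_eps :: "'b Lstr \<Rightarrow> 'b set \<Rightarrow> ('b \<Rightarrow> 'b mat) \<Rightarrow> 'b \<Rightarrow> 'b mat" where
  "ext_eps B Os eps y = (let w = Oof B Os y in
     (\<lambda>p q. if primeB B p \<and> p = q then
               (if le B w y then ad B (eps w p p) (monus B y w)
                else monus B (eps w p p) (monus B w y))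
             else eps w p q))"

end

theory Submission
  imports Defs
begin

lemma PAx0: assumes "PAminus B" shows "ad B x (ad B y z) = ad B (ad B x y) z"
  using assms unfolding PAminus_def apply (elim conjE) by metis

lemma PAx1: assumes "PAminus B" shows "ad B x y = ad B y x"
  using assms unfolding PAminus_def apply (elim conjE) by metis

lemma PAx2: assumes "PAminus B" shows "mu B x (mu B y z) = mu B (mu B x y) z"
  using assms unfolding PAminus_def apply (elim conjE) by metis

lemma PAx3: assumes "PAminus B" shows "mu B x y = mu B y x"
  using assms unfolding PAminus_def apply (elim conjE) by metis

lemma PAx4: assumes "PAminus B" shows "mu B x (ad B y z) = ad B (mu B x y) (mu B x z)"
  using assms unfolding PAminus_def apply (elim conjE) by metis

lemma PAx5: assumes "PAminus B" shows "ad B x (zer B) = x"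
  using assms unfolding PAminus_def apply (elim conjE) by metis

lemma PAx6: assumes "PAminus B" shows "mu B x (zer B) = zer B"
  using assms unfolding PAminus_def apply (elim conjE) by metis

lemma PAx7: assumes "PAminus B" shows "mu B x (on B) = x"
  using assms unfolding PAminus_def apply (elim conjE) by metis

lemma PAx8: assumes "PAminus B" shows "le B x x"
  using assms unfolding PAminus_def apply (elim conjE) by metis

lemma PAx9: assumes "PAminus B" shows "le B x y \<Longrightarrow> le B y x \<Longrightarrow> x = y"
  using assms unfolding PAminus_def apply (elim conjE) by metis

lemma PAx10: assumes "PAminus B" shows "le B x y \<Longrightarrow> le B y z \<Longrightarrow> le B x z"
  using assms unfolding PAminus_def apply (elim conjE) by metis

lemma PAx11: assumes "PAminus B" shows "le B x y \<or> le B y x"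
  using assms unfolding PAminus_def apply (elim conjE) by metis

lemma PAx12: assumes "PAminus B" shows "le B x y \<Longrightarrow> le B (ad B x z) (ad B y z)"
  using assms unfolding PAminus_def apply (elim conjE) by metis

lemma PAx13: assumes "PAminus B" shows "lt B (zer B) z \<Longrightarrow> lt B x y \<Longrightarrow> lt B (mu B x z) (mu B y z)"
  using assms unfolding PAminus_def apply (elim conjE) by metis

lemma PAx14: assumes "PAminus B" shows "le B x y \<Longrightarrow> \<exists>z. ad B x z = y"
  using assms unfolding PAminus_def apply (elim conjE) by metis

lemma PAx15: assumes "PAminus B" shows "lt B (zer B) (on B)"
  using assms unfolding PAminus_def apply (elim conjE) by metis

lemma PAx16: assumes "PAminus B" shows "le B (zer B) x"
  using assms unfolding PAminus_def apply (elim conjE) by metis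

lemma PAx17: assumes "PAminus B" shows "lt B (zer B) x \<Longrightarrow> le B (on B) x"
  using assms unfolding PAminus_def apply (elim conjE) by metis

lemmas PA_facts = PAx0 PAx1 PAx2 PAx3 PAx4 PAx5 PAx6 PAx7 PAx8 PAx9 PAx10 PAx11 PAx12 PAx13 PAx14 PAx15 PAx16 PAx17


lemma sigma_ind:
  assumes "ISigma1 B" "sigma1 \<phi>" "sat B (e(x := zer B)) \<phi>"
    "\<And>v. sat B (e(x := v)) \<phi> \<Longrightarrow> sat B (e(x := ad B v (on B))) \<phi>"
  shows "sat B (e(x := v)) \<phi>"
  using assms unfolding ISigma1_def by blast

lemma sigma_ind_P:
  assumes "ISigma1 B" "sigma1 \<phi>" "\<And>v. sat B (e(x := v)) \<phi> = P v" "P (zer B)"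
    "\<And>v. P v \<Longrightarrow> P (ad B v (on B))"
  shows "P v"
  using sigma_ind[OF assms(1,2), of e x v] assms(3-) by simp

locale IS =
  fixes B :: "'b Lstr"
  assumes IS: "ISigma1 B" and nb: "\<exists>x. lt B (on B) x"
begin

abbreviation pl (infixl "\<oplus>" 65) where "x \<oplus> y \<equiv> ad B x y"
abbreviation tm (infixl "\<otimes>" 70) where "x \<otimes> y \<equiv> mu B x y"
abbreviation leB (infix "\<preceq>" 50) where "x \<preceq> y \<equiv> le B x y"
abbreviation ltB (infix "\<prec>" 50) where "x \<prec> y \<equiv> lt B x y"
abbreviation z0 ("\<zero>") where "\<zero> \<equiv> zer B"
abbreviation o1 ("\<one>") where "\<one> \<equiv> on B"

lemma PA: "PAminus B" using IS unfolding ISigma1_def by blast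

lemmas PAf = PA_facts[OF PA]

lemma add_assoc: "x \<oplus> y \<oplus> z = x \<oplus> (y \<oplus> z)" using PAf(1) by metis
lemma add_comm: "x \<oplus> y = y \<oplus> x" using PAf(2) by metis
lemma mul_assoc: "x \<otimes> y \<otimes> z = x \<otimes> (y \<otimes> z)" using PAf(3) by metis
lemma mul_comm: "x \<otimes> y = y \<otimes> x" using PAf(4) by metis
lemma distl: "x \<otimes> (y \<oplus> z) = x \<otimes> y \<oplus> x \<otimes> z" using PAf(5) by metis
lemma add0: "x \<oplus> \<zero> = x" using PAf(6) by metis
lemma add0l: "\<zero> \<oplus> x = x" using add0 add_comm by metis
lemma mul0: "x \<otimes> \<zero> = \<zero>" using PAf(7) by metis
lemma mul1: "x \<otimes> \<one> = x" using PAf(8) by metis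
lemma le_refl: "x \<preceq> x" using PAf(9) by metis
lemma le_antisym: "x \<preceq> y \<Longrightarrow> y \<preceq> x \<Longrightarrow> x = y" using PAf(10) by metis
lemma le_trans: "x \<preceq> y \<Longrightarrow> y \<preceq> z \<Longrightarrow> x \<preceq> z" using PAf(11) by metis
lemma le_lin: "x \<preceq> y \<or> y \<preceq> x" using PAf(12) by metis
lemma le_addr: "x \<preceq> y \<Longrightarrow> x \<oplus> z \<preceq> y \<oplus> z" using PAf(13) by metis
lemma lt_mulr: "\<zero> \<prec> z \<Longrightarrow> x \<prec> y \<Longrightarrow> x \<otimes> z \<prec> y \<otimes> z" using PAf(14) by metis
lemma le_ex: "x \<preceq> y \<Longrightarrow> \<exists>z. x \<oplus> z = y" using PAf(15) by metis
lemma zero_lt_one: "\<zero> \<prec> \<one>" using PAf(16) by metis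
lemma zero_le: "\<zero> \<preceq> x" using PAf(17) by metis
lemma pos_ge1: "\<zero> \<prec> x \<Longrightarrow> \<one> \<preceq> x" using PAf(18) by metis

lemma ind:
  assumes "sigma1 \<phi>" "\<And>v. sat B (e(x := v)) \<phi> = P v" "P \<zero>" "\<And>v. P v \<Longrightarrow> P (v \<oplus> \<one>)"
  shows "P v"
  by (rule sigma_ind_P[OF IS assms])

lemma le_add_self: "x \<preceq> x \<oplus> y"
proof -
  have "\<zero> \<oplus> x \<preceq> y \<oplus> x" by (rule le_addr[OF zero_le])
  thus ?thesis by (simp only: add0l add_comm[of y x])
qed

lemma le_add_ex: "x \<preceq> y \<longleftrightarrow> (\<exists>z. y = x \<oplus> z)"
  using le_ex le_add_self by metis

lemma lt_def': "x \<prec> y \<longleftrightarrow> x \<preceq> y \<and> x \<noteq> y" by (simp add: lt_def)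

lemma add_eq_self_top:
  assumes "a \<oplus> \<one> = a" shows False
proof -
  have all: "a \<oplus> v = a" for v
  proof (rule ind[where \<phi> = "Eq (Plus (Var 1) (Var 0)) (Var 1)" and e = "(\<lambda>_. \<zero>)(1 := a)" and x = 0 and P = "\<lambda>v. a \<oplus> v = a"])
    show "sigma1 (Eq (Plus (Var 1) (Var 0)) (Var 1))" by (auto intro: sigma1.intros)
  qed (auto simp: add0 add_assoc[symmetric] assms)
  have top: "v \<preceq> a" for v
  proof -
    have "\<zero> \<oplus> v \<preceq> a \<oplus> v" by (rule le_addr[OF zero_le])
    thus ?thesis using all[of v] by (simp add: add0l)
  qed
  obtain t where t: "\<one> \<prec> t" using nb by blast
  have "\<one> \<prec> a" using t top[of t] le_trans unfolding lt_def by (metis le_antisym)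
  moreover have "\<zero> \<prec> a" using zero_lt_one \<open>\<one> \<prec> a\<close> le_trans unfolding lt_def by (metis le_antisym)
  ultimately have "\<one> \<otimes> a \<prec> a \<otimes> a" using lt_mulr by blast
  hence "a \<prec> a \<otimes> a" by (simp add: mul_comm mul1)
  thus False using top[of "a \<otimes> a"] le_antisym unfolding lt_def by blast
qed

lemma succ_mono: "x \<prec> y \<Longrightarrow> x \<oplus> \<one> \<preceq> y"
proof -
  assume "x \<prec> y"
  then obtain d where d: "y = x \<oplus> d" "d \<noteq> \<zero>" using le_add_ex unfolding lt_def by (metis add0)
  hence "\<one> \<preceq> d" using pos_ge1 zero_le unfolding lt_def by metis
  hence "\<one> \<oplus> x \<preceq> d \<oplus> x" by (rule le_addr)
  thus ?thesis using d by (simp add: add_comm)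
qed

lemma succ_inj: assumes "x \<oplus> \<one> = y \<oplus> \<one>" shows "x = y"
proof (rule ccontr)
  assume ne: "x \<noteq> y"
  have "\<exists>a. a \<oplus> \<one> = a"
  proof (cases "x \<preceq> y")
    case True
    hence "x \<prec> y" using ne unfolding lt_def by simp
    hence "x \<oplus> \<one> \<oplus> \<one> \<preceq> y \<oplus> \<one>" by (rule le_addr[OF succ_mono])
    hence "x \<oplus> \<one> \<oplus> \<one> \<preceq> x \<oplus> \<one>" using assms by simp
    moreover have "x \<oplus> \<one> \<preceq> x \<oplus> \<one> \<oplus> \<one>" by (rule le_add_self)
    ultimately show ?thesis by (blast intro: le_antisym)
  next
    case False
    hence "y \<prec> x" using ne le_lin[of x y] unfolding lt_def by auto
    hence "y \<oplus> \<one> \<oplus> \<one> \<preceq> x \<oplus> \<one>" by (rule le_addr[OF succ_mono])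
    hence "y \<oplus> \<one> \<oplus> \<one> \<preceq> y \<oplus> \<one>" using assms by simp
    moreover have "y \<oplus> \<one> \<preceq> y \<oplus> \<one> \<oplus> \<one>" by (rule le_add_self)
    ultimately show ?thesis by (blast intro: le_antisym)
  qed
  thus False using add_eq_self_top by blast
qed

lemma add_cancel: "x \<oplus> z = y \<oplus> z \<Longrightarrow> x = y"
proof -
  have "x \<oplus> z = y \<oplus> z \<longrightarrow> x = y" for z
  proof (rule ind[where \<phi> = "Disj (Neg (Eq (Plus (Var 1) (Var 0)) (Plus (Var 2) (Var 0)))) (Eq (Var 1) (Var 2))"
      and e = "(\<lambda>_. \<zero>)(1 := x, 2 := y)" and x = 0 and P = "\<lambda>z. x \<oplus> z = y \<oplus> z \<longrightarrow> x = y"])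
    show "sigma1 (Disj (Neg (Eq (Plus (Var 1) (Var 0)) (Plus (Var 2) (Var 0)))) (Eq (Var 1) (Var 2)))"
      by (auto intro: sigma1.intros)
  next
    fix v assume "x \<oplus> v = y \<oplus> v \<longrightarrow> x = y"
    show "x \<oplus> (v \<oplus> \<one>) = y \<oplus> (v \<oplus> \<one>) \<longrightarrow> x = y"
    proof
      assume "x \<oplus> (v \<oplus> \<one>) = y \<oplus> (v \<oplus> \<one>)"
      hence "x \<oplus> v \<oplus> \<one> = y \<oplus> v \<oplus> \<one>" by (simp add: add_assoc)
      hence "x \<oplus> v = y \<oplus> v" by (rule succ_inj)
      thus "x = y" using \<open>x \<oplus> v = y \<oplus> v \<longrightarrow> x = y\<close> by blast
    qed
  qed (auto simp: add0)
  thus "x \<oplus> z = y \<oplus> z \<Longrightarrow> x = y" by blast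
qed


lemma add_cancel_l: "z \<oplus> x = z \<oplus> y \<Longrightarrow> x = y"
  by (rule add_cancel[of x z y]) (simp only: add_comm[of _ z])

lemma monus_eq: "y \<oplus> d = x \<Longrightarrow> monus B x y = d"
proof -
  assume h: "y \<oplus> d = x"
  hence "y \<preceq> x" using le_add_self by blast
  hence "monus B x y = (THE d. y \<oplus> d = x)" unfolding monus_def by simp
  also have "\<dots> = d" using h add_cancel_l by blast
  finally show ?thesis .
qed

lemma monus_le: "x \<preceq> y \<Longrightarrow> monus B x y = \<zero>"
proof -
  assume "x \<preceq> y"
  show ?thesis
  proof (cases "y \<preceq> x")
    case True hence "x = y" using \<open>x \<preceq> y\<close> le_antisym by blast
    thus ?thesis using monus_eq[of y \<zero> x] add0 by simp
  next
    case False thus ?thesis unfolding monus_def by simp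
  qed
qed

lemma add_le_cancel: "x \<oplus> z \<preceq> y \<oplus> z \<Longrightarrow> x \<preceq> y"
proof (rule ccontr)
  assume h: "x \<oplus> z \<preceq> y \<oplus> z" "\<not> x \<preceq> y"
  hence "y \<preceq> x" using le_lin by blast
  hence "y \<oplus> z \<preceq> x \<oplus> z" by (rule le_addr)
  hence "y \<oplus> z = x \<oplus> z" using h(1) le_antisym by blast
  hence "x = y" using add_cancel[of y z x] by simp
  thus False using h(2) le_refl by simp
qed

lemma mul_le_mono: "x \<preceq> y \<Longrightarrow> x \<otimes> z \<preceq> y \<otimes> z"
proof -
  assume h: "x \<preceq> y"
  show ?thesis
  proof (cases "x = y \<or> z = \<zero>")
    case True thus ?thesis using le_refl mul0 by auto
  next
    case False
    hence "\<zero> \<prec> z" "x \<prec> y" using zero_le h unfolding lt_def by auto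
    thus ?thesis using lt_mulr unfolding lt_def by blast
  qed
qed

lemma monus_add: "monus B (a \<oplus> b) a = b" by (rule monus_eq) simp

lemma monus_monus: "monus B (monus B a b) c = monus B a (b \<oplus> c)"
proof (cases "b \<preceq> a")
  case True
  then obtain d where d: "a = b \<oplus> d" using le_add_ex by blast
  hence md: "monus B a b = d" using monus_eq by simp
  show ?thesis
  proof (cases "c \<preceq> d")
    case True
    then obtain e where e: "d = c \<oplus> e" using le_add_ex by blast
    hence "monus B d c = e" using monus_eq by simp
    moreover have "monus B a (b \<oplus> c) = e" using d e by (intro monus_eq) (simp add: add_assoc)
    ultimately show ?thesis using md by simp
  next
    case False
    hence "d \<preceq> c" using le_lin by blast
    hence "b \<oplus> d \<preceq> b \<oplus> c" using le_addr[of d c b] by (simp only: add_comm[of _ b])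
    thus ?thesis using md d monus_le \<open>d \<preceq> c\<close> by simp
  qed
next
  case False
  hence "a \<preceq> b" using le_lin by blast
  hence "a \<preceq> b \<oplus> c" using le_add_self le_trans by blast
  moreover have "monus B a b = \<zero>" using \<open>a \<preceq> b\<close> monus_le by blast
  ultimately show ?thesis using monus_le zero_le by simp
qed

lemma less_le_not_le': "x \<prec> y \<longleftrightarrow> x \<preceq> y \<and> \<not> y \<preceq> x"
  unfolding lt_def using le_antisym le_refl by blast

lemma add_left_mono': "a \<preceq> b \<Longrightarrow> c \<oplus> a \<preceq> c \<oplus> b"
  using le_addr[of a b c] by (simp only: add_comm[of _ c])

lemma add_le_imp_le_left': "c \<oplus> a \<preceq> c \<oplus> b \<Longrightarrow> a \<preceq> b"
  by (rule add_le_cancel[of a c b]) (simp only: add_comm[of _ c])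

lemma mul_left_strict: "a \<prec> b \<Longrightarrow> \<zero> \<prec> c \<Longrightarrow> c \<otimes> a \<prec> c \<otimes> b"
  using lt_mulr[of c a b] by (simp only: mul_comm[of _ c])

lemma mul0l: "\<zero> \<otimes> x = \<zero>" using mul0[of x] by (simp only: mul_comm[of x])
lemma mul1l: "\<one> \<otimes> x = x" using mul1[of x] by (simp only: mul_comm[of x])
lemma distr: "(y \<oplus> z) \<otimes> x = y \<otimes> x \<oplus> z \<otimes> x" using distl[of x y z] by (simp only: mul_comm[of x])

lemma no_zero_div: "a \<noteq> \<zero> \<Longrightarrow> b \<noteq> \<zero> \<Longrightarrow> a \<otimes> b \<noteq> \<zero>"
proof -
  assume "a \<noteq> \<zero>" "b \<noteq> \<zero>"
  hence "\<zero> \<prec> a" "\<zero> \<prec> b" using zero_le unfolding lt_def by auto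
  hence "\<zero> \<otimes> b \<prec> a \<otimes> b" using lt_mulr by blast
  thus ?thesis using mul0l unfolding lt_def by auto
qed

lemma mul_monus: "a \<otimes> monus B b c = monus B (a \<otimes> b) (a \<otimes> c)"
proof (cases "c \<preceq> b")
  case True
  then obtain d where "b = c \<oplus> d" using le_add_ex by blast
  thus ?thesis using monus_eq[of "a \<otimes> c" "a \<otimes> d" "a \<otimes> b"] monus_eq[of c d b] distl by simp
next
  case False
  hence "b \<preceq> c" using le_lin by blast
  hence "a \<otimes> b \<preceq> a \<otimes> c" using mul_le_mono[of b c a] by (simp only: mul_comm[of _ a])
  thus ?thesis using monus_le \<open>b \<preceq> c\<close> mul0 by simp
qed

lemma monus_add_inv: "b \<preceq> a \<Longrightarrow> monus B a b \<oplus> b = a"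
proof -
  assume "b \<preceq> a" then obtain d where "a = b \<oplus> d" using le_add_ex by blast
  thus ?thesis using monus_eq[of b d a] by (simp add: add_comm[of d b])
qed

lemma zero_ne_one: "\<zero> \<noteq> \<one>" using zero_lt_one unfolding lt_def by simp

sublocale R: linordered_semidom "ad B" "monus B" "le B" "lt B" "zer B" "mu B" "on B"
  apply unfold_locales
  apply (fact add0l add_assoc add_comm monus_add monus_monus less_le_not_le' le_refl add_left_mono' add_le_imp_le_left' mul_left_strict mul_assoc mul_comm mul0l mul1l distr no_zero_div mul_monus monus_add_inv zero_ne_one zero_lt_one le_trans le_antisym le_lin mul0 mul1 distl)+
  done
end

fun tv :: "trm \<Rightarrow> nat set" where
  "tv (Var i) = {i}" | "tv Zero = {}" | "tv One = {}"
| "tv (Plus s t) = tv s \<union> tv t" | "tv (Times s t) = tv s \<union> tv t"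

lemma evt_upd[simp]: "k \<notin> tv t \<Longrightarrow> evt B (e(k:=w)) t = evt B e t"
  by (induction t) auto

definition fLt :: "trm \<Rightarrow> trm \<Rightarrow> fm" where
  "fLt s t = Conj (Leq s t) (Neg (Eq s t))"

definition modt :: "trm \<Rightarrow> trm \<Rightarrow> trm" where
  "modt c i = Plus One (Times (Plus i One) c)"

definition fBeta :: "trm \<Rightarrow> trm \<Rightarrow> trm \<Rightarrow> trm \<Rightarrow> nat \<Rightarrow> fm" where
  "fBeta a c i v k = Conj (fLt v (modt c i)) (BEx k a (Eq a (Plus (Times (Var k) (modt c i)) v)))"

lemma delta0_fLt[simp]: "delta0 (fLt s t)" by (simp add: fLt_def)
lemma delta0_fBeta[simp]: "delta0 (fBeta a c i v k)" by (simp add: fBeta_def)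
lemma tv_modt[simp]: "tv (modt c i) = tv c \<union> tv i" by (auto simp: modt_def)
lemma sat_fLt[simp]: "sat B e (fLt s t) = lt B (evt B e s) (evt B e t)" by (simp add: fLt_def lt_def)
lemma evt_modt[simp]: "evt B e (modt c i) = ad B (on B) (mu B (ad B (evt B e i) (on B)) (evt B e c))"
  by (simp add: modt_def)

context IS begin

lemmas asimps = R.add_ac R.mult_ac R.distrib_left R.distrib_right add0 add0l mul1 mul1l mul0 mul0l

lemma sig_d0: "delta0 \<phi> \<Longrightarrow> sigma1 \<phi>" by (rule sigma1.intros)
lemma sig_ex: "sigma1 \<phi> \<Longrightarrow> sigma1 (Ex x \<phi>)" by (rule sigma1.intros)

lemma lt_succ_le: "x \<prec> y \<Longrightarrow> x \<oplus> \<one> \<preceq> y" by (rule succ_mono)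
lemma lt_succ_iff: "x \<prec> y \<oplus> \<one> \<longleftrightarrow> x \<preceq> y"
proof
  assume h: "x \<prec> y \<oplus> \<one>"
  show "x \<preceq> y"
  proof (rule ccontr)
    assume "\<not> x \<preceq> y"
    hence "y \<prec> x" using R.not_le by blast
    hence "y \<oplus> \<one> \<preceq> x" by (rule succ_mono)
    thus False using h by (simp add: R.not_le[symmetric])
  qed
next
  assume "x \<preceq> y"
  moreover have "y \<prec> y \<oplus> \<one>" using zero_lt_one R.add_strict_left_mono[of \<zero> \<one> y] by (simp add: add0)
  ultimately show "x \<prec> y \<oplus> \<one>" by (rule R.le_less_trans)
qed

lemma le_succ_cases: "x \<preceq> y \<oplus> \<one> \<Longrightarrow> x \<preceq> y \<or> x = y \<oplus> \<one>"
  using lt_succ_iff R.le_less by blast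

lemma pos_iff: "\<zero> \<prec> x \<longleftrightarrow> x \<noteq> \<zero>" using zero_le R.le_less by auto

lemma num0[simp]: "num B 0 = \<zero>" by (simp add: num_def)
lemma numS[simp]: "num B (Suc n) = num B n \<oplus> \<one>" by (simp add: num_def)
lemma num1: "num B 1 = \<one>" by (simp add: add0l)
lemma num_add: "num B (m + n) = num B m \<oplus> num B n"
  by (induction n) (simp_all add: add0 add_assoc)
lemma num_mult: "num B (m * n) = num B m \<otimes> num B n"
  by (induction n) (simp_all add: num_add mul0 distl mul1 add_comm)

lemma le_num_std: "x \<preceq> num B n \<Longrightarrow> standard B x"
proof (induction n arbitrary: x)
  case 0 thus ?case using le_antisym zero_le unfolding standard_def by (metis num0)
next
  case (Suc n)
  from Suc.prems have "x \<preceq> num B n \<or> x = num B (Suc n)" using le_succ_cases by simp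
  thus ?case
  proof
    assume "x \<preceq> num B n" thus ?thesis by (rule Suc.IH)
  next
    assume "x = num B (Suc n)" thus ?thesis unfolding standard_def by blast
  qed
qed

lemma nonstd_gt: "\<not> standard B x \<Longrightarrow> num B n \<prec> x"
proof -
  assume ns: "\<not> standard B x"
  show ?thesis
  proof (rule ccontr)
    assume "\<not> num B n \<prec> x"
    hence "x \<preceq> num B n" using R.not_less by blast
    thus False using le_num_std ns by blast
  qed
qed

lemma std_add: "standard B x \<Longrightarrow> standard B y \<Longrightarrow> standard B (x \<oplus> y)"
  unfolding standard_def by (auto simp: num_add[symmetric])
lemma std_mul: "standard B x \<Longrightarrow> standard B y \<Longrightarrow> standard B (x \<otimes> y)"
  unfolding standard_def by (auto simp: num_mult[symmetric])

lemma div_exists: "m \<noteq> \<zero> \<Longrightarrow> \<exists>q r. r \<prec> m \<and> a = q \<otimes> m \<oplus> r"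
proof -
  assume m: "m \<noteq> \<zero>"
  show ?thesis
  proof (rule ind[where \<phi> = "Ex 2 (Ex 3 (Conj (fLt (Var 3) (Var 1)) (Eq (Var 0) (Plus (Times (Var 2) (Var 1)) (Var 3)))))"
      and e = "(\<lambda>_. \<zero>)(1 := m)" and x = 0 and P = "\<lambda>a. \<exists>q r. r \<prec> m \<and> a = q \<otimes> m \<oplus> r"])
    show "sigma1 (Ex 2 (Ex 3 (Conj (fLt (Var 3) (Var 1)) (Eq (Var 0) (Plus (Times (Var 2) (Var 1)) (Var 3))))))"
      by (intro sig_ex sig_d0) simp
    show "\<exists>q r. r \<prec> m \<and> \<zero> = q \<otimes> m \<oplus> r" using m pos_iff by (intro exI[of _ \<zero>]) (simp add: mul0l add0)
    fix v assume "\<exists>q r. r \<prec> m \<and> v = q \<otimes> m \<oplus> r"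
    then obtain q r where qr: "r \<prec> m" "v = q \<otimes> m \<oplus> r" by blast
    hence "r \<oplus> \<one> \<preceq> m" using succ_mono qr(1) by blast
    hence "r \<oplus> \<one> \<prec> m \<or> r \<oplus> \<one> = m" using R.le_less by blast
    thus "\<exists>q r. r \<prec> m \<and> v \<oplus> \<one> = q \<otimes> m \<oplus> r"
    proof
      assume "r \<oplus> \<one> \<prec> m"
      moreover have "v \<oplus> \<one> = q \<otimes> m \<oplus> (r \<oplus> \<one>)" using qr by (simp add: add_assoc)
      ultimately show ?thesis by blast
    next
      assume h: "r \<oplus> \<one> = m"
      have "v \<oplus> \<one> = (q \<oplus> \<one>) \<otimes> (r \<oplus> \<one>) \<oplus> \<zero>" using qr(2) unfolding h[symmetric] by (simp add: asimps)
      hence "v \<oplus> \<one> = (q \<oplus> \<one>) \<otimes> m \<oplus> \<zero>" using h by simp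
      moreover have "\<zero> \<prec> m" using m pos_iff by blast
      ultimately show ?thesis by blast
    qed
  qed simp
qed

lemma div_unique:
  assumes "r \<prec> m" "r' \<prec> m" "q \<otimes> m \<oplus> r = q' \<otimes> m \<oplus> r'"
  shows "q = q' \<and> r = r'"
proof -
  have *: False if hh: "q1 \<prec> q2" "r1 \<prec> m" "q1 \<otimes> m \<oplus> r1 = q2 \<otimes> m \<oplus> r2" for q1 q2 r1 r2
  proof -
    obtain d where d: "q2 = q1 \<oplus> d" using hh(1) le_add_ex R.less_imp_le by blast
    have "d \<noteq> \<zero>" using d hh(1) by (auto simp: add0)
    hence "\<one> \<preceq> d" using pos_ge1 pos_iff by blast
    hence "\<one> \<otimes> m \<preceq> d \<otimes> m" by (rule mul_le_mono)
    hence "m \<preceq> d \<otimes> m" by (simp add: mul1l)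
    hence "q1 \<otimes> m \<oplus> m \<preceq> q1 \<otimes> m \<oplus> d \<otimes> m \<oplus> r2"
      using R.add_left_mono R.order_trans le_add_self by (metis add_assoc)
    also have "\<dots> = q1 \<otimes> m \<oplus> r1" using hh(3) d by (simp add: asimps)
    finally have "m \<preceq> r1" using R.add_le_cancel_left by blast
    thus False using hh(2) by (simp add: R.not_le[symmetric])
  qed
  have "q = q'" using *[of q q' r r'] *[of q' q r' r] assms R.linorder_cases[of q q'] by metis
  thus ?thesis using assms(3) R.add_left_cancel by blast
qed

lemma modB_eq: "r \<prec> m \<Longrightarrow> a = q \<otimes> m \<oplus> r \<Longrightarrow> modB B a m = r"
  unfolding modB_def
  by (rule the_equality) (auto dest: div_unique)

lemma modB_prop: "m \<noteq> \<zero> \<Longrightarrow> modB B a m \<prec> m \<and> (\<exists>q. a = q \<otimes> m \<oplus> modB B a m)"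
  using div_exists modB_eq by metis

lemma modB_le: "m \<noteq> \<zero> \<Longrightarrow> modB B a m \<preceq> a"
  using modB_prop le_add_self by (metis add_comm)

lemma modB_add_mult: "m \<noteq> \<zero> \<Longrightarrow> modB B (x \<oplus> y \<otimes> m) m = modB B x m"
proof -
  assume m: "m \<noteq> \<zero>"
  then obtain q where q: "x = q \<otimes> m \<oplus> modB B x m" "modB B x m \<prec> m" using modB_prop by blast
  define r where "r = modB B x m"
  have "x \<oplus> y \<otimes> m = (q \<oplus> y) \<otimes> m \<oplus> r" using q(1) unfolding r_def[symmetric] by (simp add: asimps)
  hence "x \<oplus> y \<otimes> m = (q \<oplus> y) \<otimes> m \<oplus> modB B x m" by (simp add: r_def)
  thus ?thesis using q modB_eq by blast
qed

lemma modB_small: "x \<prec> m \<Longrightarrow> modB B x m = x"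
  using modB_eq[of x m x \<zero>] by (simp add: mul0l add0l)

abbreviation Mo :: "'b \<Rightarrow> 'b \<Rightarrow> 'b" where "Mo c i \<equiv> \<one> \<oplus> (i \<oplus> \<one>) \<otimes> c"

lemma Mo_nz: "Mo c i \<noteq> \<zero>"
proof
  assume "Mo c i = \<zero>"
  hence "\<one> \<preceq> \<zero>" using le_add_self by metis
  thus False using zero_lt_one by (simp add: R.not_le[symmetric])
qed

lemma beta_Mo: "beta B a c i = modB B a (Mo c i)" by (simp add: beta_def)

lemma beta_le: "beta B a c i \<preceq> a" using modB_le Mo_nz beta_Mo by metis
lemma beta_lt: "beta B a c i \<prec> Mo c i" using modB_prop Mo_nz beta_Mo by metis

lemma q_le: "a = q \<otimes> m \<oplus> v \<Longrightarrow> m \<noteq> \<zero> \<Longrightarrow> q \<preceq> a"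
proof -
  assume a: "a = q \<otimes> m \<oplus> v" and m: "m \<noteq> \<zero>"
  have "\<one> \<preceq> m" using m pos_ge1 pos_iff by blast
  hence "q \<otimes> \<one> \<preceq> q \<otimes> m" using mul_le_mono mul_comm by metis
  thus ?thesis using a le_add_self R.order_trans by (metis mul1)
qed

lemma beta_char: "beta B a c i = v \<longleftrightarrow> v \<prec> Mo c i \<and> (\<exists>q. q \<preceq> a \<and> a = q \<otimes> Mo c i \<oplus> v)"
proof
  assume "beta B a c i = v"
  thus "v \<prec> Mo c i \<and> (\<exists>q. q \<preceq> a \<and> a = q \<otimes> Mo c i \<oplus> v)"
    using modB_prop[OF Mo_nz] beta_Mo q_le[OF _ Mo_nz] by metis
next
  assume "v \<prec> Mo c i \<and> (\<exists>q. q \<preceq> a \<and> a = q \<otimes> Mo c i \<oplus> v)"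
  thus "beta B a c i = v" using modB_eq beta_Mo by metis
qed

lemma sat_fBeta[simp]: "k \<notin> tv a \<Longrightarrow> k \<notin> tv c \<Longrightarrow> k \<notin> tv i \<Longrightarrow> k \<notin> tv v \<Longrightarrow>
  sat B e (fBeta a c i v k) = (beta B (evt B e a) (evt B e c) (evt B e i) = evt B e v)"
  unfolding beta_char by (simp add: fBeta_def)

end

definition fLetBeta :: "nat \<Rightarrow> trm \<Rightarrow> trm \<Rightarrow> trm \<Rightarrow> nat \<Rightarrow> fm \<Rightarrow> fm" where
  "fLetBeta w a c i k \<psi> = BEx w a (Conj (fBeta a c i (Var w) k) \<psi>)"
definition fAllLt :: "nat \<Rightarrow> trm \<Rightarrow> fm \<Rightarrow> fm" where
  "fAllLt i t \<psi> = BAll i t (Disj (Neg (fLt (Var i) t)) \<psi>)"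
definition fExLt :: "nat \<Rightarrow> trm \<Rightarrow> fm \<Rightarrow> fm" where
  "fExLt i t \<psi> = BEx i t (Conj (fLt (Var i) t) \<psi>)"
definition fDvdMo :: "trm \<Rightarrow> trm \<Rightarrow> trm \<Rightarrow> nat \<Rightarrow> fm" where
  "fDvdMo L c i k = BEx k L (Eq L (Times (Var k) (modt c i)))"
definition fInvMo :: "trm \<Rightarrow> trm \<Rightarrow> trm \<Rightarrow> nat \<Rightarrow> nat \<Rightarrow> fm" where
  "fInvMo L c j k1 k2 = BEx k1 (modt c j) (BEx k2 (Times (Var k1) L)
     (Conj (fLt (Var k1) (modt c j)) (Eq (Times (Var k1) L) (Plus One (Times (Var k2) (modt c j))))))"

lemma delta0_more[simp]:
  "delta0 \<psi> \<Longrightarrow> delta0 (fLetBeta w a c i k \<psi>)"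
  "delta0 \<psi> \<Longrightarrow> delta0 (fAllLt ii t \<psi>)"
  "delta0 \<psi> \<Longrightarrow> delta0 (fExLt ii t \<psi>)"
  "delta0 (fDvdMo L c i k)"
  "delta0 (fInvMo L c j k1 k2)"
  by (simp_all add: fLetBeta_def fAllLt_def fExLt_def fDvdMo_def fInvMo_def)

context IS begin

definition dvdB :: "'b \<Rightarrow> 'b \<Rightarrow> bool" where "dvdB d x \<longleftrightarrow> (\<exists>q. x = q \<otimes> d)"
definition invm :: "'b \<Rightarrow> 'b \<Rightarrow> bool" where "invm L m \<longleftrightarrow> (\<exists>u k. u \<otimes> L = \<one> \<oplus> k \<otimes> m)"
definition invb :: "'b \<Rightarrow> 'b \<Rightarrow> bool" where
  "invb L m \<longleftrightarrow> (\<exists>u k. u \<prec> m \<and> k \<preceq> u \<otimes> L \<and> u \<otimes> L = \<one> \<oplus> k \<otimes> m)"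

lemma one_le_iff: "\<one> \<preceq> x \<longleftrightarrow> x \<noteq> \<zero>"
  using pos_ge1 pos_iff zero_lt_one R.less_le_trans by blast

lemma le_mul_self: "\<one> \<preceq> m \<Longrightarrow> q \<preceq> q \<otimes> m"
  using mul_le_mono[of \<one> m q] by (simp add: mul1l mul_comm)

lemma le_add_self2: "y \<preceq> x \<oplus> y" using le_add_self[of y x] by (simp only: add_comm[of y x])
lemma le_mul_self2: "\<one> \<preceq> m \<Longrightarrow> q \<preceq> m \<otimes> q" using le_mul_self[of m q] by (simp only: mul_comm[of q m])

lemma le_mul_Mo: "q \<preceq> q \<otimes> Mo c i" using le_mul_self one_le_iff Mo_nz by blast

lemma sat_fLetBeta[simp]:
  "w \<notin> tv a \<Longrightarrow> w \<notin> tv c \<Longrightarrow> w \<notin> tv i \<Longrightarrow> k \<noteq> w \<Longrightarrow> k \<notin> tv a \<Longrightarrow> k \<notin> tv c \<Longrightarrow> k \<notin> tv i \<Longrightarrow>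
   sat B e (fLetBeta w a c i k \<psi>) = sat B (e(w := beta B (evt B e a) (evt B e c) (evt B e i))) \<psi>"
  unfolding fLetBeta_def using beta_le by auto

lemma sat_fAllLt[simp]: "i \<notin> tv t \<Longrightarrow> sat B e (fAllLt i t \<psi>) = (\<forall>x. x \<prec> evt B e t \<longrightarrow> sat B (e(i := x)) \<psi>)"
  unfolding fAllLt_def using R.less_imp_le by auto

lemma sat_fExLt[simp]: "i \<notin> tv t \<Longrightarrow> sat B e (fExLt i t \<psi>) = (\<exists>x. x \<prec> evt B e t \<and> sat B (e(i := x)) \<psi>)"
  unfolding fExLt_def using R.less_imp_le by auto

lemma sat_fDvdMo[simp]: "k \<notin> tv L \<Longrightarrow> k \<notin> tv c \<Longrightarrow> k \<notin> tv i \<Longrightarrow>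
   sat B e (fDvdMo L c i k) = dvdB (Mo (evt B e c) (evt B e i)) (evt B e L)"
  unfolding fDvdMo_def dvdB_def apply auto using le_mul_Mo by blast

lemma sat_fInvMo[simp]: "k1 \<noteq> k2 \<Longrightarrow> k1 \<notin> tv L \<Longrightarrow> k1 \<notin> tv c \<Longrightarrow> k1 \<notin> tv j \<Longrightarrow>
   k2 \<notin> tv L \<Longrightarrow> k2 \<notin> tv c \<Longrightarrow> k2 \<notin> tv j \<Longrightarrow>
   sat B e (fInvMo L c j k1 k2) = invb (evt B e L) (Mo (evt B e c) (evt B e j))"
  unfolding fInvMo_def invb_def using R.less_imp_le by auto


lemma lcm_exists: "\<exists>d. \<one> \<preceq> d \<and> (\<forall>D. \<one> \<preceq> D \<longrightarrow> D \<preceq> N \<longrightarrow> dvdB D d)"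
proof -
  let ?\<phi> = "Ex 2 (Conj (Leq One (Var 2)) (BAll 3 (Var 0) (Disj (Neg (Leq One (Var 3))) (BEx 4 (Var 2) (Eq (Var 2) (Times (Var 4) (Var 3)))))))"
  have "\<exists>d. \<one> \<preceq> d \<and> (\<forall>D. D \<preceq> N \<longrightarrow> \<one> \<preceq> D \<longrightarrow> (\<exists>q. q \<preceq> d \<and> d = q \<otimes> D))"
  proof (rule ind[where \<phi> = ?\<phi> and e = "\<lambda>_. \<zero>" and x = 0 and
      P = "\<lambda>N. \<exists>d. \<one> \<preceq> d \<and> (\<forall>D. D \<preceq> N \<longrightarrow> \<one> \<preceq> D \<longrightarrow> (\<exists>q. q \<preceq> d \<and> d = q \<otimes> D))"])
    show "sigma1 ?\<phi>" by (intro sig_ex sig_d0) simp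
    show "\<exists>d. \<one> \<preceq> d \<and> (\<forall>D. D \<preceq> \<zero> \<longrightarrow> \<one> \<preceq> D \<longrightarrow> (\<exists>q. q \<preceq> d \<and> d = q \<otimes> D))"
      using one_le_iff le_antisym zero_le R.order_refl by blast
  next
    fix v assume "\<exists>d. \<one> \<preceq> d \<and> (\<forall>D. D \<preceq> v \<longrightarrow> \<one> \<preceq> D \<longrightarrow> (\<exists>q. q \<preceq> d \<and> d = q \<otimes> D))"
    then obtain d where d: "\<one> \<preceq> d" "\<And>D. D \<preceq> v \<Longrightarrow> \<one> \<preceq> D \<Longrightarrow> \<exists>q. q \<preceq> d \<and> d = q \<otimes> D" by blast
    have v1: "\<one> \<preceq> v \<oplus> \<one>" using le_add_self2 by blast
    let ?d = "d \<otimes> (v \<oplus> \<one>)"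
    have "\<one> \<preceq> ?d" using d(1) v1 one_le_iff no_zero_div by blast
    moreover have "\<exists>q. q \<preceq> ?d \<and> ?d = q \<otimes> D" if hD: "D \<preceq> v \<oplus> \<one>" "\<one> \<preceq> D" for D
    proof -
      have "\<exists>q. ?d = q \<otimes> D"
      proof (cases "D \<preceq> v")
        case True then obtain q where "d = q \<otimes> D" using d(2) hD(2) by blast
        thus ?thesis by (intro exI[of _ "q \<otimes> (v \<oplus> \<one>)"]) (simp add: asimps)
      next
        case False hence "D = v \<oplus> \<one>" using le_succ_cases hD(1) by blast
        thus ?thesis by blast
      qed
      then obtain q where "?d = q \<otimes> D" by blast
      moreover have "q \<preceq> q \<otimes> D" using le_mul_self hD(2) by blast
      ultimately show ?thesis by auto
    qed
    ultimately show "\<exists>d. \<one> \<preceq> d \<and> (\<forall>D. D \<preceq> v \<oplus> \<one> \<longrightarrow> \<one> \<preceq> D \<longrightarrow> (\<exists>q. q \<preceq> d \<and> d = q \<otimes> D))" by blast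
  qed simp
  thus ?thesis unfolding dvdB_def by blast
qed


lemma not_lt_zero[simp]: "\<not> x \<prec> \<zero>" using zero_le R.not_less by blast

lemma succ_nz: "x \<oplus> \<one> \<noteq> \<zero>"
proof
  assume h: "x \<oplus> \<one> = \<zero>"
  have "\<one> \<preceq> x \<oplus> \<one>" by (rule le_add_self2)
  hence "\<one> \<preceq> \<zero>" using h by simp
  thus False using zero_lt_one by (simp add: R.not_le[symmetric])
qed

lemma one_le_mul_succ: "\<one> \<preceq> c \<Longrightarrow> \<one> \<preceq> (j \<oplus> \<one>) \<otimes> c"
  using one_le_iff no_zero_div succ_nz by blast

lemma le_lt_succ: "x \<preceq> y \<Longrightarrow> x \<prec> y \<oplus> \<one>" using lt_succ_iff by blast

lemma mono_mul2: "a \<preceq> b \<Longrightarrow> c \<preceq> d \<Longrightarrow> a \<otimes> c \<preceq> b \<otimes> d"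
  using mul_le_mono[of a b c] mul_le_mono[of c d b] mul_comm R.order_trans by metis

lemma Mo_inv:
  assumes c1: "\<one> \<preceq> c" and dv: "\<forall>D. \<one> \<preceq> D \<longrightarrow> D \<preceq> n \<longrightarrow> dvdB D c"
    and ij: "i \<prec> j" and jn: "j \<preceq> n"
  shows "invm (Mo c i) (Mo c j)"
proof -
  obtain D where j: "j = i \<oplus> D" using ij le_add_ex R.less_imp_le by blast
  have "D \<noteq> \<zero>" using j ij by (auto simp: add0)
  hence D1: "\<one> \<preceq> D" using one_le_iff by blast
  have "D \<preceq> j" using j le_add_self2 by blast
  hence "D \<preceq> n" using jn R.order_trans by blast
  then obtain t where t: "c = t \<otimes> D" using dv D1 unfolding dvdB_def by blast
  define u where "u = (j \<oplus> \<one>) \<otimes> (j \<oplus> \<one>) \<otimes> (j \<oplus> \<one>) \<otimes> t \<otimes> c"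
  define k1 where "k1 = (j \<oplus> \<one>) \<otimes> c \<oplus> (j \<oplus> \<one>) \<otimes> (j \<oplus> \<one>) \<otimes> t \<otimes> (i \<oplus> \<one>) \<otimes> c"
  have iden: "u \<otimes> Mo c i \<oplus> Mo c j = \<one> \<oplus> Mo c j \<otimes> k1"
    unfolding u_def k1_def j t by (simp add: asimps)
  have "\<one> \<preceq> (j \<oplus> \<one>) \<otimes> c" using c1 by (rule one_le_mul_succ)
  hence "\<one> \<preceq> k1" unfolding k1_def using le_add_self R.order_trans by blast
  then obtain k0 where k0: "k1 = \<one> \<oplus> k0" using le_add_ex by blast
  have "u \<otimes> Mo c i \<oplus> Mo c j = (\<one> \<oplus> k0 \<otimes> Mo c j) \<oplus> Mo c j"
    using iden unfolding k0 by (simp add: asimps)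
  hence "u \<otimes> Mo c i = \<one> \<oplus> k0 \<otimes> Mo c j" by (rule add_cancel)
  thus ?thesis unfolding invm_def by blast
qed

lemma inv_mult: "invm L m \<Longrightarrow> invm L' m \<Longrightarrow> invm (L \<otimes> L') m"
proof -
  assume "invm L m" "invm L' m"
  then obtain u1 k1 u2 k2 where a: "u1 \<otimes> L = \<one> \<oplus> k1 \<otimes> m" "u2 \<otimes> L' = \<one> \<oplus> k2 \<otimes> m"
    unfolding invm_def by blast
  have "(u1 \<otimes> u2) \<otimes> (L \<otimes> L') = (u1 \<otimes> L) \<otimes> (u2 \<otimes> L')" by (simp add: asimps)
  also have "\<dots> = \<one> \<oplus> (k1 \<oplus> k2 \<oplus> k1 \<otimes> k2 \<otimes> m) \<otimes> m" unfolding a by (simp add: asimps)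
  finally show ?thesis unfolding invm_def by blast
qed

lemma invb_invm: "invb L m \<Longrightarrow> invm L m" unfolding invb_def invm_def by blast

lemma inv_bound:
  assumes m: "\<one> \<prec> m" and iv: "invm L m"
  shows "invb L m"
proof -
  obtain u k where uk: "u \<otimes> L = \<one> \<oplus> k \<otimes> m" using iv unfolding invm_def by blast
  have mz: "m \<noteq> \<zero>" using m zero_le R.not_le by (metis R.less_le_trans zero_lt_one R.less_irrefl)
  obtain q u' where qu: "u' \<prec> m" "u = q \<otimes> m \<oplus> u'" using div_exists[OF mz] by blast
  have uL: "u \<otimes> L = q \<otimes> L \<otimes> m \<oplus> u' \<otimes> L" unfolding qu(2) by (simp add: asimps)
  have "q \<otimes> L \<preceq> k"
  proof (rule ccontr)
    assume "\<not> q \<otimes> L \<preceq> k"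
    hence "k \<prec> q \<otimes> L" using R.not_le by blast
    hence "k \<oplus> \<one> \<preceq> q \<otimes> L" by (rule succ_mono)
    hence "(k \<oplus> \<one>) \<otimes> m \<preceq> q \<otimes> L \<otimes> m" by (rule mul_le_mono)
    also have "\<dots> \<preceq> u \<otimes> L" unfolding uL by (rule le_add_self)
    finally have "k \<otimes> m \<oplus> m \<preceq> k \<otimes> m \<oplus> \<one>" unfolding uk by (simp add: asimps)
    hence "m \<preceq> \<one>" using R.add_le_cancel_left by blast
    thus False using m by (simp add: R.not_le[symmetric])
  qed
  then obtain k' where k': "k = q \<otimes> L \<oplus> k'" using le_add_ex by blast
  have "q \<otimes> L \<otimes> m \<oplus> u' \<otimes> L = q \<otimes> L \<otimes> m \<oplus> (\<one> \<oplus> k' \<otimes> m)"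
    using uk uL k' by (simp add: asimps)
  hence e: "u' \<otimes> L = \<one> \<oplus> k' \<otimes> m" by (rule add_cancel_l)
  have "k' \<preceq> k' \<otimes> m" using le_mul_self m R.less_imp_le by blast
  also have "\<dots> \<preceq> u' \<otimes> L" unfolding e using le_add_self2 by blast
  finally show ?thesis unfolding invb_def using qu(1) e by blast
qed

lemma one_lt_Mo: "\<one> \<preceq> c \<Longrightarrow> \<one> \<prec> Mo c j"
proof -
  assume "\<one> \<preceq> c"
  hence "\<one> \<preceq> (j \<oplus> \<one>) \<otimes> c" by (rule one_le_mul_succ)
  hence "\<zero> \<prec> (j \<oplus> \<one>) \<otimes> c" using pos_iff one_le_iff by blast
  hence "\<one> \<oplus> \<zero> \<prec> \<one> \<oplus> (j \<oplus> \<one>) \<otimes> c" by (rule R.add_strict_left_mono)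
  thus ?thesis by (simp add: add0)
qed


lemma ext_code: "\<exists>a' c'. (\<forall>i. i \<prec> n \<longrightarrow> beta B a' c' i = beta B a c i) \<and> beta B a' c' n = v"
proof -
  obtain d where d: "\<one> \<preceq> d" "\<forall>D. \<one> \<preceq> D \<longrightarrow> D \<preceq> n \<longrightarrow> dvdB D d" using lcm_exists by blast
  define c' where "c' = d \<otimes> (a \<oplus> v \<oplus> \<one>)"
  have c1: "\<one> \<preceq> c'" unfolding c'_def using d(1) one_le_iff no_zero_div succ_nz by blast
  have dv: "\<forall>D. \<one> \<preceq> D \<longrightarrow> D \<preceq> n \<longrightarrow> dvdB D c'"
  proof (intro allI impI)
    fix D assume "\<one> \<preceq> D" "D \<preceq> n"
    then obtain q where "d = q \<otimes> D" using d(2) unfolding dvdB_def by blast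
    hence "c' = (q \<otimes> (a \<oplus> v \<oplus> \<one>)) \<otimes> D" unfolding c'_def by (simp add: asimps)
    thus "dvdB D c'" unfolding dvdB_def by blast
  qed
  have "a \<oplus> v \<prec> a \<oplus> v \<oplus> \<one>" using le_lt_succ R.order_refl by blast
  also have "a \<oplus> v \<oplus> \<one> \<preceq> c'" unfolding c'_def using le_mul_self2[OF d(1)] by blast
  finally have big: "a \<oplus> v \<prec> c'" .
  have cM: "c' \<preceq> Mo c' i" for i
  proof -
    have "c' \<preceq> (i \<oplus> \<one>) \<otimes> c'" using le_mul_self2[of "i \<oplus> \<one>" c'] one_le_iff succ_nz by blast
    also have "\<dots> \<preceq> Mo c' i" using le_add_self2 by blast
    finally show ?thesis .
  qed
  define val where "val i = (if i \<prec> n then beta B a c i else v)" for i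
  have val_lt: "val i \<prec> Mo c' i" for i
  proof -
    have "val i \<preceq> a \<oplus> v" unfolding val_def using R.order_trans[OF beta_le le_add_self] le_add_self2 by auto
    thus ?thesis using big cM R.le_less_trans R.less_le_trans by blast
  qed
  let ?VAL = "Disj (Conj (fLt (Var 8) (Var 1)) (fLetBeta 10 (Var 2) (Var 3) (Var 8) 11 (fBeta (Var 6) (Var 5) (Var 8) (Var 10) 11)))
                   (Conj (Eq (Var 8) (Var 1)) (fBeta (Var 6) (Var 5) (Var 8) (Var 4) 11))"
  let ?\<phi> = "Ex 6 (Ex 7 (Disj (Neg (Leq (Var 0) (Plus (Var 1) One)))
     (Conj (fAllLt 8 (Var 0) (Conj ?VAL (fDvdMo (Var 7) (Var 5) (Var 8) 12)))
           (BAll 9 (Var 1) (Disj (Neg (Leq (Var 0) (Var 9))) (fInvMo (Var 7) (Var 5) (Var 9) 13 14))))))"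
  define P where "P k = (\<exists>a' L. k \<preceq> n \<oplus> \<one> \<longrightarrow>
     ((\<forall>i. i \<prec> k \<longrightarrow> ((i \<prec> n \<and> beta B a' c' i = beta B a c i) \<or> (i = n \<and> beta B a' c' i = v)) \<and> dvdB (Mo c' i) L)
      \<and> (\<forall>j. j \<preceq> n \<longrightarrow> k \<preceq> j \<longrightarrow> invb L (Mo c' j))))" for k
  have "P (n \<oplus> \<one>)"
  proof (rule ind[where \<phi> = ?\<phi> and e = "(\<lambda>_. \<zero>)(1 := n, 2 := a, 3 := c, 4 := v, 5 := c')" and x = 0 and P = P])
    show "sigma1 ?\<phi>" by (intro sig_ex sig_d0) simp
    show "\<And>k. sat B (((\<lambda>_. \<zero>)(1 := n, 2 := a, 3 := c, 4 := v, 5 := c'))(0 := k)) ?\<phi> = P k"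
      unfolding P_def by simp
    show "P \<zero>" unfolding P_def
    proof (rule exI[of _ \<zero>], rule exI[of _ \<one>], intro impI conjI allI)
      fix j assume "j \<preceq> n" "\<zero> \<preceq> j"
      have "\<one> \<prec> Mo c' j" using one_lt_Mo c1 by blast
      moreover have "\<one> \<otimes> \<one> = \<one> \<oplus> \<zero> \<otimes> Mo c' j" by (simp add: mul1 mul0l add0)
      ultimately show "invb \<one> (Mo c' j)" unfolding invb_def using zero_le by blast
    qed auto
  next
    fix k assume Pk: "P k"
    show "P (k \<oplus> \<one>)"
    proof (cases "k \<oplus> \<one> \<preceq> n \<oplus> \<one>")
      case False thus ?thesis unfolding P_def by blast
    next
      case True
      hence kn: "k \<preceq> n" using R.add_le_cancel_right by blast
      hence "k \<preceq> n \<oplus> \<one>" using le_add_self R.order_trans by blast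
      then obtain a' L where
        IH1: "\<And>i. i \<prec> k \<Longrightarrow> ((i \<prec> n \<and> beta B a' c' i = beta B a c i) \<or> (i = n \<and> beta B a' c' i = v)) \<and> dvdB (Mo c' i) L"
        and IH2: "\<And>j. j \<preceq> n \<Longrightarrow> k \<preceq> j \<Longrightarrow> invb L (Mo c' j)"
        using Pk unfolding P_def by blast
      obtain u k0 where uk: "u \<otimes> L = \<one> \<oplus> k0 \<otimes> Mo c' k"
        using IH2[OF kn R.order_refl] unfolding invb_def by blast
      define m1 where "m1 = (k \<oplus> \<one>) \<otimes> c'"
      define a'' where "a'' = a' \<oplus> L \<otimes> u \<otimes> (val k \<oplus> m1 \<otimes> a')"
      have VALk: "(k \<prec> n \<and> beta B a'' c' k = beta B a c k) \<or> (k = n \<and> beta B a'' c' k = v)"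
      proof -
        have "a'' = a' \<oplus> (u \<otimes> L) \<otimes> (val k \<oplus> m1 \<otimes> a')" unfolding a''_def by (simp add: asimps)
        also have "\<dots> = (a' \<oplus> k0 \<otimes> (val k \<oplus> m1 \<otimes> a')) \<otimes> Mo c' k \<oplus> val k"
          unfolding uk m1_def by (simp add: asimps)
        finally have "beta B a'' c' k = val k" using beta_Mo modB_eq val_lt by metis
        thus ?thesis using kn R.le_less unfolding val_def by auto
      qed
      have "P (k \<oplus> \<one>)" unfolding P_def
      proof (rule exI[of _ a''], rule exI[of _ "L \<otimes> Mo c' k"], rule impI, rule conjI; intro allI impI)
        fix i assume "i \<prec> k \<oplus> \<one>"
        hence "i \<prec> k \<or> i = k" using lt_succ_iff R.le_less by blast
        thus "((i \<prec> n \<and> beta B a'' c' i = beta B a c i) \<or> (i = n \<and> beta B a'' c' i = v)) \<and> dvdB (Mo c' i) (L \<otimes> Mo c' k)"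
        proof
          assume ik: "i \<prec> k"
          obtain t where t: "L = t \<otimes> Mo c' i" using IH1[OF ik] unfolding dvdB_def by blast
          have "a'' = a' \<oplus> (t \<otimes> u \<otimes> (val k \<oplus> m1 \<otimes> a')) \<otimes> Mo c' i" unfolding a''_def t by (simp add: asimps)
          hence "beta B a'' c' i = beta B a' c' i" using beta_Mo modB_add_mult Mo_nz by metis
          moreover have "L \<otimes> Mo c' k = (t \<otimes> Mo c' k) \<otimes> Mo c' i" unfolding t by (simp add: asimps)
          ultimately show ?thesis using IH1[OF ik] unfolding dvdB_def by auto
        next
          assume "i = k"
          thus ?thesis using VALk unfolding dvdB_def by (auto simp: mul_comm)
        qed
      next
        fix j assume j: "j \<preceq> n" "k \<oplus> \<one> \<preceq> j"
        hence kj: "k \<prec> j" using lt_succ_iff R.not_le by (metis R.less_le_trans le_lt_succ R.order_refl)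
        have "invm L (Mo c' j)" using IH2[OF j(1)] kj R.less_imp_le invb_invm by blast
        moreover have "invm (Mo c' k) (Mo c' j)" using Mo_inv[OF c1 dv kj j(1)] .
        ultimately have "invm (L \<otimes> Mo c' k) (Mo c' j)" by (rule inv_mult)
        thus "invb (L \<otimes> Mo c' k) (Mo c' j)" using inv_bound one_lt_Mo c1 by blast
      qed
      thus ?thesis .
    qed
  qed
  then obtain a' L where H: "\<And>i. i \<prec> n \<oplus> \<one> \<Longrightarrow> (i \<prec> n \<and> beta B a' c' i = beta B a c i) \<or> (i = n \<and> beta B a' c' i = v)"
    unfolding P_def using R.order_refl by blast
  have "\<forall>i. i \<prec> n \<longrightarrow> beta B a' c' i = beta B a c i" using H le_lt_succ R.less_imp_le by blast
  moreover have "beta B a' c' n = v" using H[of n] le_lt_succ R.order_refl by auto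
  ultimately show ?thesis by blast
qed

end

definition envU :: "(nat \<Rightarrow> 'b) \<Rightarrow> (nat \<Rightarrow> 'b) \<Rightarrow> nat \<Rightarrow> 'b" where
  "envU e f = (\<lambda>j. if j < 20 then f j else e j)"

lemma envU_upd[simp]: "j < 20 \<Longrightarrow> (envU e f)(j := v) = envU e (f(j := v))"
  by (auto simp: envU_def)
lemma envU_apply[simp]: "envU e f j = (if j < 20 then f j else e j)"
  by (simp add: envU_def)

context IS begin

definition d0set :: "('b \<Rightarrow> bool) \<Rightarrow> bool" where
  "d0set S \<longleftrightarrow> (\<exists>\<phi> e. delta0 \<phi> \<and> (\<forall>f. sat B (envU e f) \<phi> = S (f 0)))"
definition d0fun :: "('b \<Rightarrow> 'b) \<Rightarrow> bool" where
  "d0fun g \<longleftrightarrow> (\<exists>\<phi> e. delta0 \<phi> \<and> (\<forall>f. sat B (envU e f) \<phi> = (f 1 = g (f 0))))"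

lemma code_set:
  assumes d: "d0set S" and bd: "\<forall>x. S x \<longrightarrow> x \<prec> b"
  shows "coded B {x. S x}"
proof -
  obtain \<phi> e where \<phi>: "delta0 \<phi>" "\<And>f. sat B (envU e f) \<phi> = S (f 0)" using d unfolding d0set_def by blast
  let ?\<psi> = "Ex 2 (Ex 3 (Ex 4 (Conj
     (fAllLt 5 (Var 4) (Conj (fLetBeta 8 (Var 2) (Var 3) (Var 5) 7 (fLt (Var 8) (Var 9))) (fLetBeta 0 (Var 2) (Var 3) (Var 5) 7 \<phi>)))
     (fAllLt 0 (Var 9) (Disj (Neg \<phi>) (fExLt 5 (Var 4) (fBeta (Var 2) (Var 3) (Var 5) (Var 0) 7)))))))"
  define P where "P k = (\<exists>a c n. (\<forall>i. i \<prec> n \<longrightarrow> beta B a c i \<prec> k \<and> S (beta B a c i)) \<and>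
      (\<forall>x. x \<prec> k \<longrightarrow> S x \<longrightarrow> (\<exists>i. i \<prec> n \<and> beta B a c i = x)))" for k
  have "P b"
  proof (rule ind[where \<phi> = ?\<psi> and e = "envU e (\<lambda>_. \<zero>)" and x = 9 and P = P])
    show "sigma1 ?\<psi>" by (intro sig_ex sig_d0) (simp add: \<phi>)
    show "\<And>k. sat B ((envU e (\<lambda>_. \<zero>))(9 := k)) ?\<psi> = P k"
      unfolding P_def by (simp add: \<phi>)
    show "P \<zero>" unfolding P_def by (rule exI[of _ \<zero>], rule exI[of _ \<zero>], rule exI[of _ \<zero>]) auto
  next
    fix k assume "P k"
    then obtain a c n where H1: "\<And>i. i \<prec> n \<Longrightarrow> beta B a c i \<prec> k \<and> S (beta B a c i)"
      and H2: "\<And>x. x \<prec> k \<Longrightarrow> S x \<Longrightarrow> \<exists>i. i \<prec> n \<and> beta B a c i = x" unfolding P_def by blast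
    have kk: "k \<prec> k \<oplus> \<one>" using le_lt_succ R.order_refl by blast
    show "P (k \<oplus> \<one>)"
    proof (cases "S k")
      case True
      obtain a' c' where a': "\<And>i. i \<prec> n \<Longrightarrow> beta B a' c' i = beta B a c i" "beta B a' c' n = k"
        using ext_code by blast
      show ?thesis unfolding P_def
      proof (rule exI[of _ a'], rule exI[of _ c'], rule exI[of _ "n \<oplus> \<one>"], rule conjI; intro allI impI)
        fix i assume "i \<prec> n \<oplus> \<one>"
        hence "i \<prec> n \<or> i = n" using lt_succ_iff R.le_less by blast
        thus "beta B a' c' i \<prec> k \<oplus> \<one> \<and> S (beta B a' c' i)"
        proof
          assume "i \<prec> n"
          thus ?thesis using H1[of i] a'(1)[of i] R.less_trans[OF _ kk] by auto
        next
          assume "i = n" thus ?thesis using a'(2) kk True by simp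
        qed
      next
        fix x assume "x \<prec> k \<oplus> \<one>" "S x"
        hence "x \<prec> k \<or> x = k" using lt_succ_iff R.le_less by blast
        thus "\<exists>i. i \<prec> n \<oplus> \<one> \<and> beta B a' c' i = x"
        proof
          assume "x \<prec> k"
          then obtain i where "i \<prec> n" "beta B a c i = x" using H2 \<open>S x\<close> by blast
          thus ?thesis using a'(1) le_lt_succ R.less_imp_le by metis
        next
          assume "x = k" thus ?thesis using a'(2) le_lt_succ R.order_refl by blast
        qed
      qed
    next
      case False
      show ?thesis unfolding P_def
      proof (rule exI[of _ a], rule exI[of _ c], rule exI[of _ n], rule conjI; intro allI impI)
        fix i assume "i \<prec> n"
        thus "beta B a c i \<prec> k \<oplus> \<one> \<and> S (beta B a c i)" using H1 kk R.less_trans by blast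
      next
        fix x assume "x \<prec> k \<oplus> \<one>" "S x"
        hence "x \<prec> k" using lt_succ_iff R.le_less False by blast
        thus "\<exists>i. i \<prec> n \<and> beta B a c i = x" using H2 \<open>S x\<close> by blast
      qed
    qed
  qed
  then obtain a c n where H1: "\<And>i. i \<prec> n \<Longrightarrow> S (beta B a c i)"
      and H2: "\<And>x. x \<prec> b \<Longrightarrow> S x \<Longrightarrow> \<exists>i. i \<prec> n \<and> beta B a c i = x" unfolding P_def by blast
  have "{x. S x} = {x. \<exists>i. lt B i n \<and> x = beta B a c i}"
    using H1 H2 bd by blast
  thus ?thesis unfolding coded_def by blast
qed


lemma succ_le_lt: "i \<oplus> \<one> \<preceq> K \<Longrightarrow> i \<prec> K"
  using R.less_le_trans[OF le_lt_succ[OF R.order_refl]] by blast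

lemma beta00: "beta B \<zero> c \<zero> = \<zero>"
  using modB_small[of \<zero> "Mo c \<zero>"] beta_Mo Mo_nz pos_iff by metis

lemma bsum_exists:
  assumes d: "d0fun g"
  shows "\<exists>s. bsum B g K s"
proof -
  obtain \<phi> e where \<phi>: "delta0 \<phi>" "\<And>f. sat B (envU e f) \<phi> = (f 1 = g (f 0))" using d unfolding d0fun_def by blast
  let ?\<psi> = "Ex 2 (Ex 3 (Disj (Neg (Leq (Var 9) (Var 10)))
     (Conj (fBeta (Var 2) (Var 3) Zero Zero 7)
       (fAllLt 0 (Var 9) (fLetBeta 4 (Var 2) (Var 3) (Var 0) 7 (fLetBeta 5 (Var 2) (Var 3) (Plus (Var 0) One) 7
          (BEx 1 (Var 5) (Conj \<phi> (Eq (Var 5) (Plus (Var 4) (Var 1)))))))))))"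
  define P where "P k = (\<exists>a c. k \<preceq> K \<longrightarrow> beta B a c \<zero> = \<zero> \<and>
      (\<forall>i. i \<prec> k \<longrightarrow> beta B a c (i \<oplus> \<one>) = beta B a c i \<oplus> g i))" for k
  have eqv: "sat B ((envU e ((\<lambda>_. \<zero>)(10 := K)))(9 := k)) ?\<psi> = P k" for k
  proof -
    have h: "(u \<preceq> y \<and> y = z \<oplus> u) = (y = z \<oplus> u)" for u y z
      using le_add_self2 by blast
    show ?thesis unfolding P_def by (simp add: \<phi> h)
  qed
  have "P K"
  proof (rule ind[where \<phi> = ?\<psi> and e = "envU e ((\<lambda>_. \<zero>)(10 := K))" and x = 9 and P = P])
    show "sigma1 ?\<psi>" by (intro sig_ex sig_d0) (simp add: \<phi>)
    show "\<And>k. sat B ((envU e ((\<lambda>_. \<zero>)(10 := K)))(9 := k)) ?\<psi> = P k" by (rule eqv)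
    show "P \<zero>" unfolding P_def using beta00 by auto
  next
    fix k assume Pk: "P k"
    show "P (k \<oplus> \<one>)"
    proof (cases "k \<oplus> \<one> \<preceq> K")
      case False thus ?thesis unfolding P_def by blast
    next
      case True
      hence "k \<preceq> K" using le_add_self R.order_trans by blast
      then obtain a c where H0: "beta B a c \<zero> = \<zero>"
        and H: "\<And>i. i \<prec> k \<Longrightarrow> beta B a c (i \<oplus> \<one>) = beta B a c i \<oplus> g i" using Pk unfolding P_def by blast
      obtain a' c' where a': "\<And>i. i \<prec> k \<oplus> \<one> \<Longrightarrow> beta B a' c' i = beta B a c i"
        "beta B a' c' (k \<oplus> \<one>) = beta B a c k \<oplus> g k" using ext_code by blast
      have kk: "k \<prec> k \<oplus> \<one>" using le_lt_succ R.order_refl by blast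
      have z: "\<zero> \<prec> k \<oplus> \<one>" using zero_le kk R.le_less_trans by blast
      show ?thesis unfolding P_def
      proof (rule exI[of _ a'], rule exI[of _ c'], intro impI conjI allI)
        show "beta B a' c' \<zero> = \<zero>" using a'(1)[OF z] H0 by simp
        fix i assume "i \<prec> k \<oplus> \<one>"
        hence "i \<prec> k \<or> i = k" using lt_succ_iff R.le_less by blast
        thus "beta B a' c' (i \<oplus> \<one>) = beta B a' c' i \<oplus> g i"
        proof
          assume ik: "i \<prec> k"
          hence "i \<oplus> \<one> \<prec> k \<oplus> \<one>" using R.add_strict_right_mono by blast
          thus ?thesis using a'(1) H[OF ik] ik R.less_trans[OF ik kk] by simp
        next
          assume "i = k" thus ?thesis using a' kk by simp
        qed
      qed
    qed
  qed
  then obtain a c where "beta B a c \<zero> = \<zero>" "\<And>i. i \<prec> K \<Longrightarrow> beta B a c (i \<oplus> \<one>) = beta B a c i \<oplus> g i"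
    unfolding P_def using R.order_refl by blast
  thus ?thesis unfolding bsum_def by blast
qed

lemma bsum_perturb:
  assumes s: "bsum B g K s" and s': "bsum B g' K s'" and r0: "r0 \<prec> K"
    and eq: "\<And>i. i \<prec> K \<Longrightarrow> i \<noteq> r0 \<Longrightarrow> g i = g' i" and w: "g r0 \<oplus> w = g' r0 \<oplus> w'"
  shows "s \<oplus> w = s' \<oplus> w'"
proof -
  obtain a c where A: "beta B a c \<zero> = \<zero>" "\<And>i. i \<prec> K \<Longrightarrow> beta B a c (i \<oplus> \<one>) = beta B a c i \<oplus> g i"
    "beta B a c K = s" using s unfolding bsum_def lt_def by blast
  obtain a' c' where A': "beta B a' c' \<zero> = \<zero>" "\<And>i. i \<prec> K \<Longrightarrow> beta B a' c' (i \<oplus> \<one>) = beta B a' c' i \<oplus> g' i"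
    "beta B a' c' K = s'" using s' unfolding bsum_def lt_def by blast
  let ?\<psi> = "Disj (Neg (Leq (Var 0) (Var 5)))
     (fLetBeta 10 (Var 1) (Var 2) (Var 0) 11 (fLetBeta 12 (Var 3) (Var 4) (Var 0) 11
       (Disj (Conj (Leq (Var 0) (Var 6)) (Eq (Var 10) (Var 12)))
             (Conj (fLt (Var 6) (Var 0)) (Eq (Plus (Var 10) (Var 7)) (Plus (Var 12) (Var 8)))))))"
  define Q where "Q i = (i \<preceq> K \<longrightarrow> ((i \<preceq> r0 \<and> beta B a c i = beta B a' c' i) \<or>
      (r0 \<prec> i \<and> beta B a c i \<oplus> w = beta B a' c' i \<oplus> w')))" for i
  have "Q K"
  proof (rule ind[where \<phi> = ?\<psi> and e = "(\<lambda>_. \<zero>)(1 := a, 2 := c, 3 := a', 4 := c', 5 := K, 6 := r0, 7 := w, 8 := w')"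
        and x = 0 and P = Q])
    show "sigma1 ?\<psi>" by (intro sig_d0) simp
    show "\<And>v. sat B (((\<lambda>_. \<zero>)(1 := a, 2 := c, 3 := a', 4 := c', 5 := K, 6 := r0, 7 := w, 8 := w'))(0 := v)) ?\<psi> = Q v"
      unfolding Q_def by auto
    show "Q \<zero>" unfolding Q_def using A(1) A'(1) zero_le by simp
  next
    fix i assume Qi: "Q i"
    show "Q (i \<oplus> \<one>)" unfolding Q_def
    proof
      assume i1: "i \<oplus> \<one> \<preceq> K"
      hence iK: "i \<prec> K" by (rule succ_le_lt)
      hence Qi': "(i \<preceq> r0 \<and> beta B a c i = beta B a' c' i) \<or> (r0 \<prec> i \<and> beta B a c i \<oplus> w = beta B a' c' i \<oplus> w')"
        using Qi R.less_imp_le unfolding Q_def by blast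
      have st: "beta B a c (i \<oplus> \<one>) = beta B a c i \<oplus> g i" "beta B a' c' (i \<oplus> \<one>) = beta B a' c' i \<oplus> g' i"
        using A(2)[OF iK] A'(2)[OF iK] by auto
      consider "i \<prec> r0" | "i = r0" | "r0 \<prec> i" by (rule R.linorder_cases)
      thus "(i \<oplus> \<one> \<preceq> r0 \<and> beta B a c (i \<oplus> \<one>) = beta B a' c' (i \<oplus> \<one>)) \<or>
            (r0 \<prec> i \<oplus> \<one> \<and> beta B a c (i \<oplus> \<one>) \<oplus> w = beta B a' c' (i \<oplus> \<one>) \<oplus> w')"
      proof cases
        case 1
        hence "i \<noteq> r0" "\<not> r0 \<prec> i" using R.not_less R.less_imp_le unfolding lt_def by auto
        hence "beta B a c i = beta B a' c' i" using Qi' by blast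
        moreover have "g i = g' i" using eq[OF iK \<open>i \<noteq> r0\<close>] .
        moreover have "i \<oplus> \<one> \<preceq> r0" using 1 by (rule succ_mono)
        ultimately show ?thesis using st by simp
      next
        case 2
        hence "beta B a c i = beta B a' c' i" using Qi' by (auto simp: lt_def)
        have "beta B a c (i \<oplus> \<one>) \<oplus> w = beta B a c i \<oplus> (g r0 \<oplus> w)" using st(1) 2 by (simp add: add_assoc)
        also have "\<dots> = beta B a' c' i \<oplus> (g' r0 \<oplus> w')" using w \<open>beta B a c i = beta B a' c' i\<close> by simp
        also have "\<dots> = beta B a' c' (i \<oplus> \<one>) \<oplus> w'" using st(2) 2 by (simp add: add_assoc)
        finally have "beta B a c (i \<oplus> \<one>) \<oplus> w = beta B a' c' (i \<oplus> \<one>) \<oplus> w'" .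
        moreover have "r0 \<prec> i \<oplus> \<one>" using 2 le_lt_succ R.order_refl by blast
        ultimately show ?thesis by blast
      next
        case 3
        hence "i \<noteq> r0" "\<not> i \<preceq> r0" using R.not_le unfolding lt_def by auto
        hence h3: "beta B a c i \<oplus> w = beta B a' c' i \<oplus> w'" using Qi' by blast
        have "g i = g' i" using eq[OF iK \<open>i \<noteq> r0\<close>] .
        have "beta B a c (i \<oplus> \<one>) \<oplus> w = (beta B a c i \<oplus> w) \<oplus> g i" using st(1) by (simp add: asimps)
        also have "\<dots> = (beta B a' c' i \<oplus> w') \<oplus> g' i" using h3 \<open>g i = g' i\<close> by simp
        also have "\<dots> = beta B a' c' (i \<oplus> \<one>) \<oplus> w'" using st(2) by (simp add: asimps)
        finally have "beta B a c (i \<oplus> \<one>) \<oplus> w = beta B a' c' (i \<oplus> \<one>) \<oplus> w'" .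
        moreover have "r0 \<prec> i \<oplus> \<one>" using 3 le_lt_succ R.less_imp_le by blast
        ultimately show ?thesis by blast
      qed
    qed
  qed
  thus ?thesis unfolding Q_def using A(3) A'(3) r0 R.order_refl R.not_le by blast
qed

lemma bsum_unique:
  assumes s: "bsum B g K s" and s': "bsum B g' K s'" and eq: "\<And>i. i \<prec> K \<Longrightarrow> g i = g' i"
  shows "s = s'"
proof (cases "K = \<zero>")
  case True thus ?thesis using s s' unfolding bsum_def by auto
next
  case False
  hence "\<zero> \<prec> K" using pos_iff by blast
  have "g \<zero> = g' \<zero>" using eq[OF \<open>\<zero> \<prec> K\<close>] .
  from bsum_perturb[OF s s' \<open>\<zero> \<prec> K\<close>, of \<zero> \<zero>] eq this show ?thesis by (simp add: add0)
qed

lemma bsum_extend: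
  assumes s: "bsum B g K s" and s': "bsum B g K' s'" and KK: "K \<preceq> K'"
    and z: "\<And>i. K \<preceq> i \<Longrightarrow> i \<prec> K' \<Longrightarrow> g i = \<zero>"
  shows "s = s'"
proof -
  obtain a c where A: "beta B a c \<zero> = \<zero>" "\<And>i. i \<prec> K \<Longrightarrow> beta B a c (i \<oplus> \<one>) = beta B a c i \<oplus> g i"
    "beta B a c K = s" using s unfolding bsum_def lt_def by blast
  obtain a' c' where A': "beta B a' c' \<zero> = \<zero>" "\<And>i. i \<prec> K' \<Longrightarrow> beta B a' c' (i \<oplus> \<one>) = beta B a' c' i \<oplus> g i"
    "beta B a' c' K' = s'" using s' unfolding bsum_def lt_def by blast
  let ?\<psi> = "Disj (Neg (Leq (Var 0) (Var 6)))
     (fLetBeta 10 (Var 1) (Var 2) (Var 0) 11 (fLetBeta 12 (Var 3) (Var 4) (Var 0) 11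
       (Disj (Conj (Leq (Var 0) (Var 5)) (Eq (Var 10) (Var 12)))
             (Conj (Leq (Var 5) (Var 0)) (Eq (Var 12) (Var 7))))))"
  define Q where "Q i = (i \<preceq> K' \<longrightarrow> ((i \<preceq> K \<and> beta B a c i = beta B a' c' i) \<or>
      (K \<preceq> i \<and> beta B a' c' i = s)))" for i
  have "Q K'"
  proof (rule ind[where \<phi> = ?\<psi> and e = "(\<lambda>_. \<zero>)(1 := a, 2 := c, 3 := a', 4 := c', 5 := K, 6 := K', 7 := s)"
        and x = 0 and P = Q])
    show "sigma1 ?\<psi>" by (intro sig_d0) simp
    show "\<And>v. sat B (((\<lambda>_. \<zero>)(1 := a, 2 := c, 3 := a', 4 := c', 5 := K, 6 := K', 7 := s))(0 := v)) ?\<psi> = Q v"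
      unfolding Q_def by auto
    show "Q \<zero>" unfolding Q_def using A(1) A'(1) zero_le by simp
  next
    fix i assume Qi: "Q i"
    show "Q (i \<oplus> \<one>)" unfolding Q_def
    proof
      assume i1: "i \<oplus> \<one> \<preceq> K'"
      hence iK: "i \<prec> K'" by (rule succ_le_lt)
      hence Qi': "(i \<preceq> K \<and> beta B a c i = beta B a' c' i) \<or> (K \<preceq> i \<and> beta B a' c' i = s)"
        using Qi R.less_imp_le unfolding Q_def by blast
      have st': "beta B a' c' (i \<oplus> \<one>) = beta B a' c' i \<oplus> g i" using A'(2)[OF iK] by auto
      show "(i \<oplus> \<one> \<preceq> K \<and> beta B a c (i \<oplus> \<one>) = beta B a' c' (i \<oplus> \<one>)) \<or>
            (K \<preceq> i \<oplus> \<one> \<and> beta B a' c' (i \<oplus> \<one>) = s)"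
      proof (cases "i \<oplus> \<one> \<preceq> K")
        case True
        hence iK2: "i \<prec> K" by (rule succ_le_lt)
        hence "beta B a c i = beta B a' c' i" using Qi' R.not_le by blast
        thus ?thesis using True A(2)[OF iK2] st' by simp
      next
        case False
        hence Ki: "K \<preceq> i" using R.not_le lt_succ_iff by blast
        have "beta B a' c' i = s"
        proof (cases "K = i")
          case True thus ?thesis using Qi' A(3) by auto
        next
          case False thus ?thesis using Qi' Ki by auto
        qed
        moreover have "g i = \<zero>" using z Ki iK by blast
        ultimately show ?thesis using st' Ki le_add_self R.order_trans by (auto simp: add0)
      qed
    qed
  qed
  thus ?thesis unfolding Q_def using A(3) A'(3) KK R.order_refl le_antisym by blast
qed

end

definition CPt :: "trm \<Rightarrow> trm \<Rightarrow> trm" where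
  "CPt x y = Plus (Times (Plus x y) (Plus (Plus x y) One)) (Plus y y)"
definition fTriple :: "trm \<Rightarrow> trm \<Rightarrow> trm \<Rightarrow> trm \<Rightarrow> nat \<Rightarrow> fm" where
  "fTriple p q v t k = BEx k t (Conj (Eq (Plus (Var k) (Var k)) (CPt q v)) (Eq (Plus t t) (CPt p (Var k))))"
definition fPrime :: "trm \<Rightarrow> nat \<Rightarrow> nat \<Rightarrow> fm" where
  "fPrime p k1 k2 = Conj (fLt One p) (BAll k1 p (BAll k2 p
     (Disj (Neg (Eq (Times (Var k1) (Var k2)) p)) (Disj (Eq (Var k1) One) (Eq (Var k1) p)))))"

lemma tv_CPt[simp]: "tv (CPt x y) = tv x \<union> tv y" by (auto simp: CPt_def)
lemma delta0_fTriple[simp]: "delta0 (fTriple p q v t k)" by (simp add: fTriple_def CPt_def)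
lemma delta0_fPrime[simp]: "delta0 (fPrime p k1 k2)" by (simp add: fPrime_def)

context IS begin

declare R.one_add_one[simp del]

abbreviation CP :: "'b \<Rightarrow> 'b \<Rightarrow> 'b" where
  "CP x y \<equiv> (x \<oplus> y) \<otimes> ((x \<oplus> y) \<oplus> \<one>) \<oplus> (y \<oplus> y)"

lemma evt_CPt[simp]: "evt B e (CPt x y) = CP (evt B e x) (evt B e y)" by (simp add: CPt_def)

lemma even_ex: "\<exists>h. h \<oplus> h = s \<otimes> (s \<oplus> \<one>)"
proof (rule ind[where \<phi> = "Ex 2 (Eq (Plus (Var 2) (Var 2)) (Times (Var 0) (Plus (Var 0) One)))"
      and e = "\<lambda>_. \<zero>" and x = 0 and P = "\<lambda>s. \<exists>h. h \<oplus> h = s \<otimes> (s \<oplus> \<one>)"])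
  show "sigma1 (Ex 2 (Eq (Plus (Var 2) (Var 2)) (Times (Var 0) (Plus (Var 0) One))))"
    by (intro sig_ex sig_d0) simp
  show "\<exists>h. h \<oplus> h = \<zero> \<otimes> (\<zero> \<oplus> \<one>)" by (rule exI[of _ \<zero>]) (simp add: add0 mul0l)
next
  fix v assume "\<exists>h. h \<oplus> h = v \<otimes> (v \<oplus> \<one>)"
  then obtain h where h: "h \<oplus> h = v \<otimes> (v \<oplus> \<one>)" by blast
  have "(h \<oplus> v \<oplus> \<one>) \<oplus> (h \<oplus> v \<oplus> \<one>) = (h \<oplus> h) \<oplus> (v \<oplus> \<one>) \<oplus> (v \<oplus> \<one>)" by (simp add: asimps)
  also have "\<dots> = (v \<oplus> \<one>) \<otimes> (v \<oplus> \<one> \<oplus> \<one>)" unfolding h by (simp add: asimps)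
  finally show "\<exists>h. h \<oplus> h = (v \<oplus> \<one>) \<otimes> (v \<oplus> \<one> \<oplus> \<one>)" by blast
qed simp

lemma dbl_strict: "x \<prec> y \<Longrightarrow> x \<oplus> x \<prec> y \<oplus> y"
  using R.add_strict_mono by blast

lemma dbl_le_iff: "x \<oplus> x \<preceq> y \<oplus> y \<longleftrightarrow> x \<preceq> y"
  using dbl_strict R.add_mono R.not_le by metis

lemma dbl_inj: "x \<oplus> x = y \<oplus> y \<Longrightarrow> x = y"
  using dbl_le_iff le_antisym R.order_refl by metis

lemma CP_even: "\<exists>z. z \<oplus> z = CP x y"
proof -
  obtain h where "h \<oplus> h = (x \<oplus> y) \<otimes> ((x \<oplus> y) \<oplus> \<one>)" using even_ex by blast
  hence "(h \<oplus> h) \<oplus> (y \<oplus> y) = CP x y" by simp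
  moreover have "(h \<oplus> y) \<oplus> (h \<oplus> y) = (h \<oplus> h) \<oplus> (y \<oplus> y)" by (simp add: asimps)
  ultimately have "(h \<oplus> y) \<oplus> (h \<oplus> y) = CP x y" by simp
  thus ?thesis by blast
qed

lemma cpair_prop: "cpair B x y \<oplus> cpair B x y = CP x y"
proof -
  obtain z where z: "z \<oplus> z = CP x y" using CP_even by blast
  have "cpair B x y = z" unfolding cpair_def
  proof (rule the_equality)
    show "z \<oplus> z = CP x y" by (rule z)
    fix w assume "w \<oplus> w = CP x y"
    hence "w \<oplus> w = z \<oplus> z" using z by simp
    thus "w = z" by (rule dbl_inj)
  qed
  thus ?thesis using z by simp
qed

lemma cpair_eq: "z \<oplus> z = CP x y \<Longrightarrow> cpair B x y = z"
  using cpair_prop[of x y] dbl_inj[of "cpair B x y" z] by simp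


lemma CP_mono: "x \<preceq> x' \<Longrightarrow> y \<preceq> y' \<Longrightarrow> CP x y \<preceq> CP x' y'"
proof -
  assume h: "x \<preceq> x'" "y \<preceq> y'"
  hence s: "x \<oplus> y \<preceq> x' \<oplus> y'" using R.add_mono by blast
  hence "x \<oplus> y \<oplus> \<one> \<preceq> x' \<oplus> y' \<oplus> \<one>" using R.add_right_mono by blast
  hence "(x \<oplus> y) \<otimes> ((x \<oplus> y) \<oplus> \<one>) \<preceq> (x' \<oplus> y') \<otimes> ((x' \<oplus> y') \<oplus> \<one>)" using s mono_mul2 by blast
  moreover have "y \<oplus> y \<preceq> y' \<oplus> y'" using h R.add_mono by blast
  ultimately show ?thesis using R.add_mono by blast
qed

lemma cpair_mono: "x \<preceq> x' \<Longrightarrow> y \<preceq> y' \<Longrightarrow> cpair B x y \<preceq> cpair B x' y'"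
  using CP_mono cpair_prop dbl_le_iff by metis

lemma le_CP: "x \<oplus> y \<oplus> (x \<oplus> y) \<preceq> CP x y"
proof -
  define s where "s = x \<oplus> y"
  have "s \<oplus> s \<preceq> s \<otimes> (s \<oplus> \<one>)"
  proof (cases "s = \<zero>")
    case True thus ?thesis by (simp add: add0 mul0l zero_le)
  next
    case False
    hence "s \<preceq> s \<otimes> s" using le_mul_self one_le_iff by blast
    hence "s \<oplus> s \<preceq> s \<otimes> s \<oplus> s" using R.add_right_mono by blast
    thus ?thesis by (simp add: distl mul1)
  qed
  also have "\<dots> \<preceq> CP x y" unfolding s_def by (rule le_add_self)
  finally show ?thesis unfolding s_def .
qed

lemma cpair_ge: "x \<preceq> cpair B x y" "y \<preceq> cpair B x y"
proof -
  have "x \<oplus> y \<preceq> cpair B x y" using le_CP cpair_prop dbl_le_iff by metis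
  thus "x \<preceq> cpair B x y" "y \<preceq> cpair B x y" using le_add_self le_add_self2 R.order_trans by blast+
qed

lemma CP_strict:
  assumes "x \<oplus> y \<prec> x' \<oplus> y'" shows "CP x y \<prec> CP x' y'"
proof -
  define s where "s = x \<oplus> y"
  define s' where "s' = x' \<oplus> y'"
  have ss: "s \<oplus> \<one> \<preceq> s'" using assms succ_mono unfolding s_def s'_def by blast
  have "y \<preceq> s" unfolding s_def by (rule le_add_self2)
  hence "y \<oplus> y \<prec> (s \<oplus> \<one>) \<oplus> (s \<oplus> \<one>)" using dbl_strict le_lt_succ by blast
  hence "CP x y \<prec> s \<otimes> (s \<oplus> \<one>) \<oplus> ((s \<oplus> \<one>) \<oplus> (s \<oplus> \<one>))" unfolding s_def
    using R.add_strict_left_mono by blast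
  also have "\<dots> = (s \<oplus> \<one>) \<otimes> ((s \<oplus> \<one>) \<oplus> \<one>)" by (simp add: asimps)
  also have "\<dots> \<preceq> s' \<otimes> (s' \<oplus> \<one>)" using ss mono_mul2 R.add_right_mono by blast
  also have "\<dots> \<preceq> CP x' y'" unfolding s'_def by (rule le_add_self)
  finally show ?thesis .
qed

lemma cpair_inj: "cpair B x y = cpair B x' y' \<Longrightarrow> x = x' \<and> y = y'"
proof -
  assume h: "cpair B x y = cpair B x' y'"
  hence CPe: "CP x y = CP x' y'" using cpair_prop by metis
  have "x \<oplus> y = x' \<oplus> y'"
  proof (rule ccontr)
    assume "x \<oplus> y \<noteq> x' \<oplus> y'"
    hence "x \<oplus> y \<prec> x' \<oplus> y' \<or> x' \<oplus> y' \<prec> x \<oplus> y" using R.linorder_cases by blast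
    thus False using CP_strict CPe R.less_irrefl by metis
  qed
  hence "y \<oplus> y = y' \<oplus> y'" using CPe R.add_left_cancel by simp
  hence "y = y'" by (rule dbl_inj)
  thus ?thesis using \<open>x \<oplus> y = x' \<oplus> y'\<close> R.add_right_cancel by blast
qed

lemma triple_inj: "triple B p q v = triple B p' q' v' \<Longrightarrow> p = p' \<and> q = q' \<and> v = v'"
  unfolding triple_def using cpair_inj by blast

lemma triple_ge: "p \<preceq> triple B p q v" "q \<preceq> triple B p q v" "v \<preceq> triple B p q v"
  unfolding triple_def using cpair_ge R.order_trans by blast+

lemma triple_mono: "p \<preceq> p' \<Longrightarrow> q \<preceq> q' \<Longrightarrow> v \<preceq> v' \<Longrightarrow> triple B p q v \<preceq> triple B p' q' v'"
  unfolding triple_def using cpair_mono by blast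

lemma triple_char: "t = triple B p q v \<longleftrightarrow> (\<exists>u. u \<preceq> t \<and> u \<oplus> u = CP q v \<and> t \<oplus> t = CP p u)"
proof
  assume "t = triple B p q v"
  thus "\<exists>u. u \<preceq> t \<and> u \<oplus> u = CP q v \<and> t \<oplus> t = CP p u"
    unfolding triple_def using cpair_prop cpair_ge by blast
next
  assume "\<exists>u. u \<preceq> t \<and> u \<oplus> u = CP q v \<and> t \<oplus> t = CP p u"
  then obtain u where "u \<oplus> u = CP q v" "t \<oplus> t = CP p u" by blast
  thus "t = triple B p q v" unfolding triple_def using cpair_eq by metis
qed

lemma sat_fTriple[simp]: "k \<notin> tv p \<Longrightarrow> k \<notin> tv q \<Longrightarrow> k \<notin> tv v \<Longrightarrow> k \<notin> tv t \<Longrightarrow>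
   sat B e (fTriple p q v t k) = (evt B e t = triple B (evt B e p) (evt B e q) (evt B e v))"
  unfolding triple_char by (simp add: fTriple_def)

lemma prime_char: "primeB B p \<longleftrightarrow> \<one> \<prec> p \<and> (\<forall>d. d \<preceq> p \<longrightarrow> (\<forall>e. e \<preceq> p \<longrightarrow> d \<otimes> e = p \<longrightarrow> d = \<one> \<or> d = p))"
proof
  assume "\<one> \<prec> p \<and> (\<forall>d. d \<preceq> p \<longrightarrow> (\<forall>e. e \<preceq> p \<longrightarrow> d \<otimes> e = p \<longrightarrow> d = \<one> \<or> d = p))"
  hence h: "\<one> \<prec> p" "\<And>d e. d \<preceq> p \<Longrightarrow> e \<preceq> p \<Longrightarrow> d \<otimes> e = p \<Longrightarrow> d = \<one> \<or> d = p" by auto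
  have pz: "p \<noteq> \<zero>" using h(1) zero_le R.not_le by (metis R.less_le_trans zero_lt_one R.less_irrefl)
  show "primeB B p" unfolding primeB_def
  proof (intro conjI allI impI)
    show "\<one> \<prec> p" by (rule h(1))
    fix d e assume de: "d \<otimes> e = p"
    hence "d \<noteq> \<zero>" "e \<noteq> \<zero>" using pz mul0 mul0l by auto
    hence "d \<preceq> d \<otimes> e" "e \<preceq> d \<otimes> e" using le_mul_self le_mul_self2 one_le_iff by blast+
    thus "d = \<one> \<or> d = p" using h(2) de by auto
  qed
qed (auto simp: primeB_def)

lemma sat_fPrime[simp]: "k1 \<noteq> k2 \<Longrightarrow> k1 \<notin> tv p \<Longrightarrow> k2 \<notin> tv p \<Longrightarrow>
   sat B e (fPrime p k1 k2) = primeB B (evt B e p)"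
  unfolding prime_char by (simp add: fPrime_def)

end

definition fRd :: "trm \<Rightarrow> trm \<Rightarrow> trm \<Rightarrow> trm \<Rightarrow> trm \<Rightarrow> trm \<Rightarrow> fm" where
  "fRd a c n p r w =
    Disj (Conj (Neg (Eq w Zero)) (fExLt 11 n (fLetBeta 12 a c (Var 11) 13 (fTriple p r w (Var 12) 14))))
         (Conj (Eq w Zero) (Neg (BEx 15 a (fExLt 11 n (fLetBeta 12 a c (Var 11) 13 (fTriple p r (Var 15) (Var 12) 14))))))"

lemma delta0_fRd[simp]: "delta0 (fRd a c n p r w)" by (simp add: fRd_def)

context IS begin

definition rd :: "'b \<Rightarrow> 'b \<Rightarrow> 'b \<Rightarrow> 'b \<Rightarrow> 'b \<Rightarrow> 'b \<Rightarrow> bool" where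
  "rd a c n p r w \<longleftrightarrow> (w \<noteq> \<zero> \<and> (\<exists>i. i \<prec> n \<and> beta B a c i = triple B p r w)) \<or>
     (w = \<zero> \<and> \<not> (\<exists>w'. w' \<preceq> a \<and> (\<exists>i. i \<prec> n \<and> beta B a c i = triple B p r w')))"

lemma sat_fRd[simp]:
  assumes "{11, 12, 13, 14, 15} \<inter> (tv a \<union> tv c \<union> tv n \<union> tv p \<union> tv r \<union> tv w) = {}"
  shows "sat B e (fRd a c n p r w) =
    rd (evt B e a) (evt B e c) (evt B e n) (evt B e p) (evt B e r) (evt B e w)"
  using assms unfolding fRd_def rd_def by (simp add: eq_commute[of "triple B _ _ _"])

definition SX :: "'b mat \<Rightarrow> 'b \<Rightarrow> 'b set" where
  "SX X J = {triple B p q (X p q) | p q. primeB B p \<and> primeB B q \<and> lt B q J \<and> X p q \<noteq> zer B}"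

definition iscode :: "'b \<Rightarrow> 'b \<Rightarrow> 'b \<Rightarrow> 'b set \<Rightarrow> bool" where
  "iscode a c n S \<longleftrightarrow> S = {x. \<exists>i. lt B i n \<and> x = beta B a c i}"

lemma good_code: "good B X \<Longrightarrow> \<exists>a c n. iscode a c n (SX X J)"
  unfolding good_def SX_def iscode_def coded_def by blast

lemma good_zero: "good B X \<Longrightarrow> \<not> (primeB B p \<and> primeB B q) \<Longrightarrow> X p q = \<zero>"
  unfolding good_def by blast

lemma code_le: "iscode a c n S \<Longrightarrow> x \<in> S \<Longrightarrow> x \<preceq> a"
  unfolding iscode_def using beta_le by auto

lemma entry_in:
  assumes "good B X" "X p q \<noteq> \<zero>" "q \<prec> J"
  shows "triple B p q (X p q) \<in> SX X J" "primeB B p" "primeB B q"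
  using assms good_zero unfolding SX_def by blast+

lemma entry_le:
  assumes g: "good B X" and c: "iscode a c n (SX X J)" and q: "q \<prec> J"
  shows "X p q \<preceq> a"
proof (cases "X p q = \<zero>")
  case True thus ?thesis using zero_le by simp
next
  case False
  hence "triple B p q (X p q) \<preceq> a" using entry_in[OF g False q] code_le[OF c] by blast
  thus ?thesis using triple_ge R.order_trans by blast
qed

lemma rd_iff:
  assumes g: "good B X" and c: "iscode a c n (SX X J)" and q: "r \<prec> J"
  shows "rd a c n p r w \<longleftrightarrow> w = X p r"
proof -
  have mem: "(\<exists>i. i \<prec> n \<and> beta B a c i = t) \<longleftrightarrow> t \<in> SX X J" for t
    using c unfolding iscode_def by auto
  have inS: "triple B p r w \<in> SX X J \<longleftrightarrow> w = X p r \<and> w \<noteq> \<zero>" for w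
  proof
    assume "triple B p r w \<in> SX X J"
    then obtain p' q' where "triple B p r w = triple B p' q' (X p' q')" "X p' q' \<noteq> \<zero>"
      unfolding SX_def by blast
    thus "w = X p r \<and> w \<noteq> \<zero>" using triple_inj by metis
  next
    assume "w = X p r \<and> w \<noteq> \<zero>"
    thus "triple B p r w \<in> SX X J" using entry_in[OF g _ q] by blast
  qed
  show ?thesis
  proof
    assume "rd a c n p r w"
    hence "(w \<noteq> \<zero> \<and> triple B p r w \<in> SX X J) \<or> (w = \<zero> \<and> \<not> (\<exists>w'. w' \<preceq> a \<and> triple B p r w' \<in> SX X J))"
      unfolding rd_def mem .
    thus "w = X p r"
    proof (elim disjE)
      assume "w \<noteq> \<zero> \<and> triple B p r w \<in> SX X J" thus ?thesis using inS by blast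
    next
      assume h: "w = \<zero> \<and> \<not> (\<exists>w'. w' \<preceq> a \<and> triple B p r w' \<in> SX X J)"
      show "w = X p r"
      proof (rule ccontr)
        assume "w \<noteq> X p r"
        hence "X p r \<noteq> \<zero>" using h by simp
        hence "X p r \<preceq> a" "triple B p r (X p r) \<in> SX X J" using entry_le[OF g c q] entry_in[OF g _ q] by auto
        thus False using h by blast
      qed
    qed
  next
    assume w: "w = X p r"
    show "rd a c n p r w" unfolding rd_def mem inS using w by auto
  qed
qed

end

context IS begin

definition gXY :: "'b mat \<Rightarrow> 'b mat \<Rightarrow> 'b \<Rightarrow> 'b \<Rightarrow> 'b \<Rightarrow> 'b" where
  "gXY X Y p q = (\<lambda>r. if primeB B r then X p r \<otimes> Y r q else \<zero>)"

lemma bsum_cong: "(\<And>i. i \<prec> K \<Longrightarrow> g i = g' i) \<Longrightarrow> bsum B g K s = bsum B g' K s"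
  unfolding bsum_def by (simp add: lt_def)

lemma col_support:
  assumes g: "good B Y" shows "\<exists>K. \<forall>r. Y r q \<noteq> \<zero> \<longrightarrow> r \<prec> K"
proof -
  obtain a c n where c: "iscode a c n (SX Y (q \<oplus> \<one>))" using good_code[OF g] by blast
  have "r \<prec> a \<oplus> \<one>" if "Y r q \<noteq> \<zero>" for r
  proof -
    have "triple B r q (Y r q) \<preceq> a" using entry_in[OF g that] code_le[OF c] le_lt_succ R.order_refl by blast
    thus ?thesis using triple_ge(1) R.order_trans le_lt_succ by blast
  qed
  thus ?thesis by blast
qed

lemma mmul_char:
  assumes p: "primeB B p" and q: "primeB B q" and supp: "\<forall>r. Y r q \<noteq> \<zero> \<longrightarrow> r \<prec> K"
    and s: "bsum B (gXY X Y p q) K s"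
  shows "mmul B X Y p q = s"
proof -
  have "(THE s. \<exists>K. (\<forall>r. Y r q \<noteq> \<zero> \<longrightarrow> r \<prec> K) \<and>
          bsum B (\<lambda>r. if primeB B r then X p r \<otimes> Y r q else \<zero>) K s) = s"
  proof (rule the_equality)
    show "\<exists>K. (\<forall>r. Y r q \<noteq> \<zero> \<longrightarrow> r \<prec> K) \<and> bsum B (\<lambda>r. if primeB B r then X p r \<otimes> Y r q else \<zero>) K s"
      using supp s unfolding gXY_def by blast
  next
    fix s' assume "\<exists>K. (\<forall>r. Y r q \<noteq> \<zero> \<longrightarrow> r \<prec> K) \<and> bsum B (\<lambda>r. if primeB B r then X p r \<otimes> Y r q else \<zero>) K s'"
    then obtain K' where supp': "\<forall>r. Y r q \<noteq> \<zero> \<longrightarrow> r \<prec> K'" and s': "bsum B (gXY X Y p q) K' s'"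
      unfolding gXY_def by blast
    have z: "gXY X Y p q i = \<zero>" if "Y i q = \<zero>" for i using that unfolding gXY_def by (simp add: mul0)
    show "s' = s"
    proof (cases "K \<preceq> K'")
      case True
      have "s = s'" using bsum_extend[OF s s' True] z supp R.not_le by blast
      thus ?thesis by simp
    next
      case False
      hence "K' \<preceq> K" using le_lin by blast
      thus "s' = s" using bsum_extend[OF s' s] z supp' R.not_le by blast
    qed
  qed
  thus ?thesis unfolding mmul_def using p q by simp
qed

lemma mmul_exists:
  assumes gX: "good B X" and gY: "good B Y" and q: "primeB B q"
  shows "\<exists>s. bsum B (gXY X Y p q) K s"
proof -
  obtain aX cX nX where cX: "iscode aX cX nX (SX X K)" using good_code[OF gX] by blast
  obtain aY cY nY where cY: "iscode aY cY nY (SX Y (q \<oplus> \<one>))" using good_code[OF gY] by blast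
  have qq: "q \<prec> q \<oplus> \<one>" using le_lt_succ R.order_refl by blast
  define g' where "g' r = (if r \<prec> K then gXY X Y p q r else \<zero>)" for r
  let ?\<phi> = "Disj (Conj (Neg (fLt (Var 0) (Var 26))) (Eq (Var 1) Zero))
       (Conj (fLt (Var 0) (Var 26))
          (Disj (Conj (Neg (fPrime (Var 0) 2 3)) (Eq (Var 1) Zero))
                (Conj (fPrime (Var 0) 2 3) (BEx 4 (Var 20) (BEx 5 (Var 23)
                   (Conj (fRd (Var 20) (Var 21) (Var 22) (Var 27) (Var 0) (Var 4))
                   (Conj (fRd (Var 23) (Var 24) (Var 25) (Var 0) (Var 28) (Var 5))
                         (Eq (Var 1) (Times (Var 4) (Var 5))))))))))"
  define e where "e = (\<lambda>_::nat. \<zero>)(20 := aX, 21 := cX, 22 := nX, 23 := aY, 24 := cY, 25 := nY, 26 := K, 27 := p, 28 := q)"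
  have "d0fun g'" unfolding d0fun_def
  proof (intro exI[of _ ?\<phi>] exI[of _ e] conjI allI)
    show "delta0 ?\<phi>" by simp
    fix f :: "nat \<Rightarrow> 'b"
    define r where "r = f 0"
    define x where "x = f 1"
    have "sat B (envU e f) ?\<phi> = ((\<not> r \<prec> K \<and> x = \<zero>) \<or> (r \<prec> K \<and> ((\<not> primeB B r \<and> x = \<zero>) \<or>
        (primeB B r \<and> (\<exists>w1. w1 \<preceq> aX \<and> (\<exists>w2. w2 \<preceq> aY \<and> rd aX cX nX p r w1 \<and> rd aY cY nY r q w2 \<and> x = w1 \<otimes> w2))))))"
      unfolding r_def x_def e_def by simp
    also have "\<dots> = (x = g' r)"
    proof (cases "r \<prec> K")
      case False thus ?thesis unfolding g'_def by simp
    next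
      case True
      have "(\<exists>w1. w1 \<preceq> aX \<and> (\<exists>w2. w2 \<preceq> aY \<and> rd aX cX nX p r w1 \<and> rd aY cY nY r q w2 \<and> x = w1 \<otimes> w2))
            = (x = X p r \<otimes> Y r q)"
        using rd_iff[OF gX cX True] rd_iff[OF gY cY qq] entry_le[OF gX cX True] entry_le[OF gY cY qq] by auto
      thus ?thesis using True unfolding g'_def gXY_def by auto
    qed
    finally show "sat B (envU e f) ?\<phi> = (f 1 = g' (f 0))" unfolding r_def x_def .
  qed
  then obtain s where "bsum B g' K s" using bsum_exists by blast
  hence "bsum B (gXY X Y p q) K s" using bsum_cong[of K g' "gXY X Y p q"] unfolding g'_def by simp
  thus ?thesis by blast
qed

end

locale Setup = IS +
  fixes A Os and eps
  assumes sA: "substr B A" and OsA: "Os \<subseteq> A" and O0: "zer B \<in> Os"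
    and Oscl: "\<forall>x\<in>Os. \<forall>y\<in>Os. ad B x y \<in> Os \<and> monus B x y \<in> Os \<and> mu B x y \<in> Os"
    and uniq: "\<forall>y\<in>A. \<exists>!w. w \<in> Os \<and> simB B y w"
    and egood: "\<forall>Q\<in>Os. good B (eps Q)"
    and e0: "eps (zer B) = mzero B"
    and ehom: "\<forall>Q\<in>Os. \<forall>R\<in>Os. eps (ad B Q R) = madd B (eps Q) (eps R)
                      \<and> eps (monus B Q R) = mmonus B (eps Q) (eps R)
                      \<and> eps (mu B Q R) = mmul B (eps Q) (eps R)"
    and ens: "\<forall>Q\<in>Os. Q \<noteq> zer B \<longrightarrow> (\<forall>p. primeB B p \<longrightarrow> \<not> standard B (eps Q p p))"
begin

abbreviation Ob where "Ob y \<equiv> Oof B Os y"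
abbreviation Ee where "Ee y \<equiv> ext_eps B Os eps y"

lemma Os_add: "x \<in> Os \<Longrightarrow> y \<in> Os \<Longrightarrow> x \<oplus> y \<in> Os" using Oscl by blast
lemma Os_monus: "x \<in> Os \<Longrightarrow> y \<in> Os \<Longrightarrow> monus B x y \<in> Os" using Oscl by blast
lemma Os_mul: "x \<in> Os \<Longrightarrow> y \<in> Os \<Longrightarrow> x \<otimes> y \<in> Os" using Oscl by blast
lemma eps_add: "x \<in> Os \<Longrightarrow> y \<in> Os \<Longrightarrow> eps (x \<oplus> y) p q = eps x p q \<oplus> eps y p q"
  using ehom unfolding madd_def by metis
lemma eps_mul: "x \<in> Os \<Longrightarrow> y \<in> Os \<Longrightarrow> eps (x \<otimes> y) = mmul B (eps x) (eps y)"
  using ehom by blast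
lemma A_add: "x \<in> A \<Longrightarrow> y \<in> A \<Longrightarrow> x \<oplus> y \<in> A" using sA unfolding substr_def by blast
lemma A_mul: "x \<in> A \<Longrightarrow> y \<in> A \<Longrightarrow> x \<otimes> y \<in> A" using sA unfolding substr_def by blast
lemma A0: "\<zero> \<in> A" using sA unfolding substr_def by blast
lemma A1: "\<one> \<in> A" using sA unfolding substr_def by blast

lemma Oof_in: "y \<in> A \<Longrightarrow> Ob y \<in> Os \<and> simB B y (Ob y)"
  unfolding Oof_def by (rule theI'[OF uniq[rule_format]])

lemma Oof_eq: "y \<in> A \<Longrightarrow> w \<in> Os \<Longrightarrow> simB B y w \<Longrightarrow> Ob y = w"
  unfolding Oof_def by (rule the1_equality[OF uniq[rule_format]]) auto

definition rel :: "'a \<Rightarrow> 'a \<Rightarrow> nat \<Rightarrow> nat \<Rightarrow> bool" where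
  "rel u w a b \<longleftrightarrow> u \<oplus> num B a = w \<oplus> num B b"

lemma sim_rel: "simB B u w \<Longrightarrow> \<exists>a b. rel u w a b \<and> (a = 0 \<or> b = 0)"
proof -
  assume "simB B u w"
  then obtain n where "u = w \<oplus> num B n \<or> w = u \<oplus> num B n" unfolding simB_def by blast
  thus ?thesis
  proof
    assume "u = w \<oplus> num B n" hence "rel u w 0 n" unfolding rel_def by (simp add: add0)
    thus ?thesis by blast
  next
    assume "w = u \<oplus> num B n" hence "rel u w n 0" unfolding rel_def by (simp add: add0)
    thus ?thesis by blast
  qed
qed

lemma rel_sim: "rel u w a b \<Longrightarrow> simB B u w"
proof -
  assume h: "rel u w a b"
  show ?thesis
  proof (cases "a \<le> b")
    case True
    then obtain d where "b = a + d" using le_Suc_ex by blast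
    hence "u \<oplus> num B a = (w \<oplus> num B d) \<oplus> num B a" using h unfolding rel_def by (simp add: num_add asimps)
    hence "u = w \<oplus> num B d" by (rule add_cancel)
    thus ?thesis unfolding simB_def by blast
  next
    case False
    then obtain d where "a = b + d" using le_Suc_ex by (metis le_add_diff_inverse nat_le_linear)
    hence "(u \<oplus> num B d) \<oplus> num B b = w \<oplus> num B b" using h unfolding rel_def by (simp add: num_add asimps)
    hence "w = u \<oplus> num B d" by (metis add_cancel)
    thus ?thesis unfolding simB_def by blast
  qed
qed

lemma OO_rel: "y \<in> A \<Longrightarrow> \<exists>a b. rel y (Ob y) a b \<and> (a = 0 \<or> b = 0)"
  using Oof_in sim_rel by blast

lemma Os_std: "Q \<in> Os \<Longrightarrow> standard B Q \<Longrightarrow> Q = \<zero>"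
proof -
  assume Q: "Q \<in> Os" "standard B Q"
  then obtain n where n: "Q = num B n" unfolding standard_def by blast
  have "simB B Q \<zero>" unfolding simB_def using n by (auto simp: add0l)
  moreover have "simB B Q Q" unfolding simB_def by (intro exI[of _ 0]) (simp add: add0)
  ultimately show ?thesis using uniq Q(1) O0 OsA by blast
qed

lemma eps_big: "Q \<in> Os \<Longrightarrow> Q \<noteq> \<zero> \<Longrightarrow> primeB B p \<Longrightarrow> num B n \<prec> eps Q p p"
  using ens nonstd_gt by blast

lemma ext_diag: "primeB B p \<Longrightarrow> Ee y p p = (if Ob y \<preceq> y then eps (Ob y) p p \<oplus> monus B y (Ob y)
     else monus B (eps (Ob y) p p) (monus B (Ob y) y))"
  unfolding ext_eps_def Let_def by simp

lemma ext_off: "\<not> (primeB B p \<and> p = q) \<Longrightarrow> Ee y p q = eps (Ob y) p q"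
  unfolding ext_eps_def Let_def by auto

lemma le_num_std': "x \<preceq> num B n \<Longrightarrow> \<exists>m. x = num B m"
  using le_num_std unfolding standard_def by blast

lemma G:
  assumes u: "u \<in> A" and r: "rel u (Ob u) a b" and p: "primeB B p"
  shows "Ee u p p \<oplus> num B a = eps (Ob u) p p \<oplus> num B b"
proof -
  define Ou where "Ou = Ob u"
  have Ou: "Ou \<in> Os" using Oof_in u unfolding Ou_def by blast
  have r': "u \<oplus> num B a = Ou \<oplus> num B b" using r unfolding rel_def Ou_def .
  show ?thesis
  proof (cases "Ou \<preceq> u")
    case True
    then obtain d where d: "u = Ou \<oplus> d" using le_add_ex by blast
    hence md: "monus B u Ou = d" using monus_eq by simp
    have "Ou \<oplus> (d \<oplus> num B a) = Ou \<oplus> num B b" using r' d by (simp add: add_assoc)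
    hence da: "d \<oplus> num B a = num B b" by (rule add_cancel_l)
    have "Ee u p p = eps Ou p p \<oplus> d" using ext_diag[OF p] True md unfolding Ou_def by simp
    thus ?thesis using da unfolding Ou_def[symmetric] by (simp add: add_assoc)
  next
    case False
    hence uO: "u \<prec> Ou" using R.not_le by blast
    then obtain d where d: "Ou = u \<oplus> d" using le_add_ex R.less_imp_le by blast
    hence md: "monus B Ou u = d" using monus_eq by simp
    have "u \<oplus> num B a = u \<oplus> (d \<oplus> num B b)" using r' d by (simp add: add_assoc)
    hence ad: "num B a = d \<oplus> num B b" by (rule add_cancel_l)
    hence "d \<preceq> num B a" using le_add_self by simp
    then obtain m where m: "d = num B m" using le_num_std' by blast
    have "Ou \<noteq> \<zero>" using uO zero_le R.not_le by (metis R.le_less_trans R.less_irrefl)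
    hence "d \<prec> eps Ou p p" using eps_big[OF Ou _ p] m by blast
    hence inv: "monus B (eps Ou p p) d \<oplus> d = eps Ou p p" using monus_add_inv R.less_imp_le by blast
    have "Ee u p p = monus B (eps Ou p p) d" using ext_diag[OF p] False md unfolding Ou_def by simp
    hence "Ee u p p \<oplus> num B a = (monus B (eps Ou p p) d \<oplus> d) \<oplus> num B b" unfolding ad by (simp add: add_assoc)
    thus ?thesis using inv unfolding Ou_def[symmetric] by simp
  qed
qed


lemma eps_good: "Q \<in> Os \<Longrightarrow> good B (eps Q)" using egood by blast

lemma ext_zero: "y \<in> A \<Longrightarrow> \<not> (primeB B p \<and> primeB B q) \<Longrightarrow> Ee y p q = \<zero>"
proof -
  assume y: "y \<in> A" and np: "\<not> (primeB B p \<and> primeB B q)"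
  hence "\<not> (primeB B p \<and> p = q)" by blast
  hence "Ee y p q = eps (Ob y) p q" by (rule ext_off)
  moreover have "good B (eps (Ob y))" using eps_good Oof_in y by blast
  ultimately show ?thesis using good_zero np by simp
qed

lemma ext_good:
  assumes y: "y \<in> A" shows "good B (Ee y)"
proof -
  define M where "M = eps (Ob y)"
  have gM: "good B M" unfolding M_def using eps_good Oof_in y by blast
  obtain a b where r: "rel y (Ob y) a b" using OO_rel y by blast
  have Ed: "Ee y p p \<oplus> num B a = M p p \<oplus> num B b" if "primeB B p" for p
    using G[OF y r that] unfolding M_def .
  have Eo: "Ee y p q = M p q" if "\<not> (primeB B p \<and> p = q)" for p q
    using ext_off[OF that] unfolding M_def .
  have "coded B {triple B p q (Ee y p q) | p q. primeB B p \<and> primeB B q \<and> q \<prec> J \<and> Ee y p q \<noteq> \<zero>}" for J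
  proof -
    obtain a0 c0 n0 where c0: "iscode a0 c0 n0 (SX M J)" using good_code[OF gM] by blast
    let ?S = "{triple B p q (Ee y p q) | p q. primeB B p \<and> primeB B q \<and> q \<prec> J \<and> Ee y p q \<noteq> \<zero>}"
    let ?\<phi> = "BEx 2 (Var 0) (BEx 3 (Var 0) (BEx 4 (Var 0) (Conj (fTriple (Var 2) (Var 3) (Var 4) (Var 0) 8)
       (Conj (fPrime (Var 2) 6 7) (Conj (fPrime (Var 3) 6 7) (Conj (fLt (Var 3) (Var 23)) (Conj (Neg (Eq (Var 4) Zero))
       (Disj (Conj (Neg (Eq (Var 2) (Var 3))) (fRd (Var 20) (Var 21) (Var 22) (Var 2) (Var 3) (Var 4)))
             (Conj (Eq (Var 2) (Var 3)) (BEx 5 (Plus (Var 0) (Var 24))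
                (Conj (fRd (Var 20) (Var 21) (Var 22) (Var 2) (Var 2) (Var 5)) (Eq (Plus (Var 4) (Var 24)) (Plus (Var 5) (Var 25))))))))))))))"
    define e where "e = (\<lambda>_::nat. \<zero>)(20 := a0, 21 := c0, 22 := n0, 23 := J, 24 := num B a, 25 := num B b)"
    have "d0set (\<lambda>x. x \<in> ?S)" unfolding d0set_def
    proof (intro exI[of _ ?\<phi>] exI[of _ e] conjI allI)
      show "delta0 ?\<phi>" by simp
      fix f :: "nat \<Rightarrow> 'a"
      define x where "x = f 0"
      have "sat B (envU e f) ?\<phi> = (\<exists>p. p \<preceq> x \<and> (\<exists>q. q \<preceq> x \<and> (\<exists>v. v \<preceq> x \<and> x = triple B p q v \<and>
          primeB B p \<and> primeB B q \<and> q \<prec> J \<and> v \<noteq> \<zero> \<and>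
          ((p \<noteq> q \<and> rd a0 c0 n0 p q v) \<or> (p = q \<and> (\<exists>w. w \<preceq> x \<oplus> num B a \<and> rd a0 c0 n0 p p w \<and> v \<oplus> num B a = w \<oplus> num B b))))))"
        unfolding x_def e_def by simp
      also have "\<dots> = (\<exists>p q v. x = triple B p q v \<and> primeB B p \<and> primeB B q \<and> q \<prec> J \<and> v \<noteq> \<zero> \<and> v = Ee y p q)"
      proof -
        have key: "((p \<noteq> q \<and> rd a0 c0 n0 p q v) \<or> (p = q \<and> (\<exists>w. w \<preceq> x \<oplus> num B a \<and> rd a0 c0 n0 p p w \<and> v \<oplus> num B a = w \<oplus> num B b)))
             = (v = Ee y p q)" if "x = triple B p q v" "primeB B p" "q \<prec> J" for p q v
        proof (cases "p = q")
          case False thus ?thesis using rd_iff[OF gM c0 that(3)] Eo by auto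
        next
          case True
          have vx: "v \<preceq> x" using that(1) triple_ge by simp
          have "(\<exists>w. w \<preceq> x \<oplus> num B a \<and> rd a0 c0 n0 p p w \<and> v \<oplus> num B a = w \<oplus> num B b) = (v \<oplus> num B a = M p p \<oplus> num B b)"
          proof
            assume "v \<oplus> num B a = M p p \<oplus> num B b"
            moreover have "M p p \<preceq> M p p \<oplus> num B b" by (rule le_add_self)
            ultimately have "M p p \<preceq> x \<oplus> num B a" using vx R.add_right_mono R.order_trans by metis
            thus "\<exists>w. w \<preceq> x \<oplus> num B a \<and> rd a0 c0 n0 p p w \<and> v \<oplus> num B a = w \<oplus> num B b"
              using rd_iff[OF gM c0, of p p] that(3) True \<open>v \<oplus> num B a = M p p \<oplus> num B b\<close> by blast
          qed (use rd_iff[OF gM c0, of p p] that(3) True in auto)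
          also have "\<dots> = (v = Ee y p q)" using Ed[OF that(2)] True R.add_right_cancel by metis
          finally show ?thesis using True by simp
        qed
        show ?thesis
        proof
          assume "\<exists>p. p \<preceq> x \<and> (\<exists>q. q \<preceq> x \<and> (\<exists>v. v \<preceq> x \<and> x = triple B p q v \<and>
            primeB B p \<and> primeB B q \<and> q \<prec> J \<and> v \<noteq> \<zero> \<and>
            ((p \<noteq> q \<and> rd a0 c0 n0 p q v) \<or> (p = q \<and> (\<exists>w. w \<preceq> x \<oplus> num B a \<and> rd a0 c0 n0 p p w \<and> v \<oplus> num B a = w \<oplus> num B b)))))"
          thus "\<exists>p q v. x = triple B p q v \<and> primeB B p \<and> primeB B q \<and> q \<prec> J \<and> v \<noteq> \<zero> \<and> v = Ee y p q"
            using key by blast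
        next
          assume "\<exists>p q v. x = triple B p q v \<and> primeB B p \<and> primeB B q \<and> q \<prec> J \<and> v \<noteq> \<zero> \<and> v = Ee y p q"
          then obtain p q v where h: "x = triple B p q v" "primeB B p" "primeB B q" "q \<prec> J" "v \<noteq> \<zero>" "v = Ee y p q" by blast
          have "p \<preceq> x" "q \<preceq> x" "v \<preceq> x" using h(1) triple_ge by auto
          thus "\<exists>p. p \<preceq> x \<and> (\<exists>q. q \<preceq> x \<and> (\<exists>v. v \<preceq> x \<and> x = triple B p q v \<and>
            primeB B p \<and> primeB B q \<and> q \<prec> J \<and> v \<noteq> \<zero> \<and>
            ((p \<noteq> q \<and> rd a0 c0 n0 p q v) \<or> (p = q \<and> (\<exists>w. w \<preceq> x \<oplus> num B a \<and> rd a0 c0 n0 p p w \<and> v \<oplus> num B a = w \<oplus> num B b)))))"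
            using h key[OF h(1) h(2) h(4)] by blast
        qed
      qed
      also have "\<dots> = (x \<in> ?S)" by blast
      finally show "sat B (envU e f) ?\<phi> = (f 0 \<in> ?S)" unfolding x_def .
    qed
    moreover have "\<forall>x. x \<in> ?S \<longrightarrow> x \<prec> (a0 \<oplus> triple B J J (a0 \<oplus> num B b)) \<oplus> \<one>"
    proof (intro allI impI)
      fix x assume "x \<in> ?S"
      then obtain p q where h: "x = triple B p q (Ee y p q)" "primeB B p" "primeB B q" "q \<prec> J" "Ee y p q \<noteq> \<zero>" by blast
      have "x \<preceq> a0 \<oplus> triple B J J (a0 \<oplus> num B b)"
      proof (cases "p = q")
        case False
        hence "Ee y p q = M p q" using Eo by blast
        hence "x = triple B p q (M p q)" "M p q \<noteq> \<zero>" using h by auto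
        hence "x \<in> SX M J" using h unfolding SX_def by blast
        hence "x \<preceq> a0" using code_le[OF c0] by blast
        thus ?thesis using le_add_self R.order_trans by blast
      next
        case True
        have "Ee y p p \<preceq> Ee y p p \<oplus> num B a" by (rule le_add_self)
        also have "\<dots> = M p p \<oplus> num B b" using Ed h(2) by blast
        also have "\<dots> \<preceq> a0 \<oplus> num B b" using entry_le[OF gM c0, of p p] h(4) True R.add_right_mono by blast
        finally have "Ee y p p \<preceq> a0 \<oplus> num B b" .
        moreover have "p \<preceq> J" using h(4) True R.less_imp_le by blast
        ultimately have "x \<preceq> triple B J J (a0 \<oplus> num B b)" using h(1) True triple_mono by blast
        thus ?thesis using le_add_self2 R.order_trans by blast
      qed
      thus "x \<prec> (a0 \<oplus> triple B J J (a0 \<oplus> num B b)) \<oplus> \<one>" by (rule le_lt_succ)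
    qed
    ultimately have "coded B {x. x \<in> ?S}" by (rule code_set)
    thus ?thesis by simp
  qed
  hence "\<forall>J. coded B {triple B p q (Ee y p q) | p q. primeB B p \<and> primeB B q \<and> q \<prec> J \<and> Ee y p q \<noteq> \<zero>}" by blast
  moreover have "\<forall>p q. \<not> (primeB B p \<and> primeB B q) \<longrightarrow> Ee y p q = \<zero>" using ext_zero y by blast
  ultimately show ?thesis unfolding good_def by (intro conjI)
qed


lemma Ob_in: "y \<in> A \<Longrightarrow> Ob y \<in> Os" using Oof_in by blast

lemma ext_add:
  assumes y: "y \<in> A" and z: "z \<in> A"
  shows "Ee (y \<oplus> z) = madd B (Ee y) (Ee z)"
proof -
  obtain a b where rab: "rel y (Ob y) a b" using OO_rel y by blast
  obtain c d where rcd: "rel z (Ob z) c d" using OO_rel z by blast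
  define W where "W = Ob y \<oplus> Ob z"
  have W: "W \<in> Os" unfolding W_def using Os_add Ob_in y z by blast
  have yz: "y \<oplus> z \<in> A" using A_add y z by blast
  have "(y \<oplus> z) \<oplus> num B (a + c) = (y \<oplus> num B a) \<oplus> (z \<oplus> num B c)" by (simp add: num_add asimps)
  also have "\<dots> = (Ob y \<oplus> num B b) \<oplus> (Ob z \<oplus> num B d)" using rab rcd unfolding rel_def by simp
  also have "\<dots> = W \<oplus> num B (b + d)" unfolding W_def by (simp add: num_add asimps)
  finally have rW: "rel (y \<oplus> z) W (a + c) (b + d)" unfolding rel_def .
  have OW: "Ob (y \<oplus> z) = W" using Oof_eq[OF yz W rel_sim[OF rW]] .
  have rW': "rel (y \<oplus> z) (Ob (y \<oplus> z)) (a + c) (b + d)" using rW OW by simp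
  show ?thesis unfolding madd_def
  proof (intro ext)
    fix p q
    show "Ee (y \<oplus> z) p q = Ee y p q \<oplus> Ee z p q"
    proof (cases "primeB B p \<and> p = q")
      case True
      hence p: "primeB B p" and pq: "q = p" by auto
      have "Ee (y \<oplus> z) p p \<oplus> num B (a + c) = eps W p p \<oplus> num B (b + d)" using G[OF yz rW' p] OW by simp
      also have "\<dots> = (eps (Ob y) p p \<oplus> num B b) \<oplus> (eps (Ob z) p p \<oplus> num B d)"
        unfolding W_def using eps_add Ob_in y z by (simp add: num_add asimps)
      also have "\<dots> = (Ee y p p \<oplus> num B a) \<oplus> (Ee z p p \<oplus> num B c)" using G[OF y rab p] G[OF z rcd p] by simp
      also have "\<dots> = (Ee y p p \<oplus> Ee z p p) \<oplus> num B (a + c)" by (simp add: num_add asimps)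
      finally show ?thesis using pq add_cancel by blast
    next
      case False
      hence "Ee (y \<oplus> z) p q = eps W p q" using ext_off OW by metis
      also have "\<dots> = eps (Ob y) p q \<oplus> eps (Ob z) p q" unfolding W_def using eps_add Ob_in y z by blast
      also have "\<dots> = Ee y p q \<oplus> Ee z p q" using ext_off[OF False] by simp
      finally show ?thesis .
    qed
  qed
qed

lemma Ob0: "Ob \<zero> = \<zero>"
  using Oof_eq[OF A0 O0] unfolding simB_def by (metis add0 num0)

lemma Ob1: "Ob \<one> = \<zero>"
proof -
  have "simB B \<one> \<zero>" unfolding simB_def using num1 add0l by metis
  thus ?thesis using Oof_eq[OF A1 O0] by blast
qed

lemma ext0: "Ee \<zero> = mzero B"
proof (intro ext)
  fix p q
  show "Ee \<zero> p q = mzero B p q"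
  proof (cases "primeB B p \<and> p = q")
    case True
    hence "Ee \<zero> p q = eps \<zero> p p \<oplus> monus B \<zero> \<zero>" using ext_diag Ob0 R.order_refl by auto
    thus ?thesis using e0 monus_le[OF R.order_refl] unfolding mzero_def by (simp add: add0)
  next
    case False thus ?thesis using ext_off Ob0 e0 by simp
  qed
qed

lemma ext1: "Ee \<one> = mid B"
proof (intro ext)
  fix p q
  show "Ee \<one> p q = mid B p q"
  proof (cases "primeB B p \<and> p = q")
    case True
    hence "Ee \<one> p q = eps \<zero> p p \<oplus> monus B \<one> \<zero>" using ext_diag Ob1 zero_le by auto
    moreover have "monus B \<one> \<zero> = \<one>" using monus_eq[of \<zero> \<one> \<one>] add0l by simp
    ultimately show ?thesis using e0 True unfolding mzero_def mid_def by (auto simp: add0l)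
  next
    case False thus ?thesis using ext_off Ob1 e0 unfolding mid_def mzero_def by simp
  qed
qed

end

context Setup begin

lemma num_nz: "a \<noteq> 0 \<Longrightarrow> num B a \<noteq> \<zero>"
  by (cases a) (auto simp: succ_nz)

lemma numk_Os: "Q \<in> Os \<Longrightarrow> num B k \<otimes> Q \<in> Os \<and> eps (num B k \<otimes> Q) = (\<lambda>p q. num B k \<otimes> eps Q p q)"
proof (induction k)
  case 0 thus ?case using O0 e0 unfolding mzero_def by (simp add: mul0l)
next
  case (Suc k)
  have eq: "num B (Suc k) \<otimes> Q = num B k \<otimes> Q \<oplus> Q" by (simp add: distr mul1l)
  have "num B k \<otimes> Q \<in> Os" using Suc by blast
  hence "num B (Suc k) \<otimes> Q \<in> Os" unfolding eq using Os_add Suc.prems by blast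
  moreover have "eps (num B (Suc k) \<otimes> Q) = (\<lambda>p q. num B (Suc k) \<otimes> eps Q p q)"
  proof (intro ext)
    fix p q
    have "eps (num B (Suc k) \<otimes> Q) p q = eps (num B k \<otimes> Q) p q \<oplus> eps Q p q"
      unfolding eq using eps_add \<open>num B k \<otimes> Q \<in> Os\<close> Suc.prems by blast
    also have "\<dots> = num B (Suc k) \<otimes> eps Q p q" using Suc by (simp add: distr mul1l)
    finally show "eps (num B (Suc k) \<otimes> Q) p q = num B (Suc k) \<otimes> eps Q p q" .
  qed
  ultimately show ?case by blast
qed

lemma perturb_row:
  assumes p: "primeB B p" and pK: "p \<prec> K"
    and Ed: "E p p \<oplus> \<alpha> = M p p \<oplus> \<beta>" and Eo: "\<And>r. r \<noteq> p \<Longrightarrow> E p r = M p r"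
    and s1: "bsum B (gXY E F p q) K s1" and s2: "bsum B (gXY M F p q) K s2"
  shows "s1 \<oplus> \<alpha> \<otimes> F p q = s2 \<oplus> \<beta> \<otimes> F p q"
proof (rule bsum_perturb[OF s1 s2 pK])
  show "\<And>i. i \<prec> K \<Longrightarrow> i \<noteq> p \<Longrightarrow> gXY E F p q i = gXY M F p q i" unfolding gXY_def using Eo by simp
  have "gXY E F p q p \<oplus> \<alpha> \<otimes> F p q = (E p p \<oplus> \<alpha>) \<otimes> F p q" unfolding gXY_def using p by (simp add: distr)
  also have "\<dots> = (M p p \<oplus> \<beta>) \<otimes> F p q" using Ed by simp
  also have "\<dots> = gXY M F p q p \<oplus> \<beta> \<otimes> F p q" unfolding gXY_def using p by (simp add: distr)
  finally show "gXY E F p q p \<oplus> \<alpha> \<otimes> F p q = gXY M F p q p \<oplus> \<beta> \<otimes> F p q" .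
qed

lemma perturb_col:
  assumes q: "primeB B q" and qK: "q \<prec> K"
    and Fd: "F q q \<oplus> \<gamma> = N q q \<oplus> \<delta>" and Fo: "\<And>r. r \<noteq> q \<Longrightarrow> F r q = N r q"
    and s1: "bsum B (gXY M F p q) K s1" and s2: "bsum B (gXY M N p q) K s2"
  shows "s1 \<oplus> M p q \<otimes> \<gamma> = s2 \<oplus> M p q \<otimes> \<delta>"
proof (rule bsum_perturb[OF s1 s2 qK])
  show "\<And>i. i \<prec> K \<Longrightarrow> i \<noteq> q \<Longrightarrow> gXY M F p q i = gXY M N p q i" unfolding gXY_def using Fo by simp
  have "gXY M F p q q \<oplus> M p q \<otimes> \<gamma> = M p q \<otimes> (F q q \<oplus> \<gamma>)" unfolding gXY_def using q by (simp add: distl)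
  also have "\<dots> = M p q \<otimes> (N q q \<oplus> \<delta>)" using Fd by simp
  also have "\<dots> = gXY M N p q q \<oplus> M p q \<otimes> \<delta>" unfolding gXY_def using q by (simp add: distl)
  finally show "gXY M F p q q \<oplus> M p q \<otimes> \<gamma> = gXY M N p q q \<oplus> M p q \<otimes> \<delta>" .
qed

lemma Os_nonstd: "Q \<in> Os \<Longrightarrow> Q \<noteq> \<zero> \<Longrightarrow> num B n \<prec> Q"
  using Os_std nonstd_gt by blast

lemma rel_big: "y \<in> A \<Longrightarrow> rel y (Ob y) a b \<Longrightarrow> a \<noteq> 0 \<Longrightarrow> (a = 0 \<or> b = 0) \<Longrightarrow> Ob y \<noteq> \<zero>"
proof
  assume "rel y (Ob y) a b" "a \<noteq> 0" "a = 0 \<or> b = 0" "Ob y = \<zero>"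
  hence "y \<oplus> num B a = \<zero>" unfolding rel_def by (simp add: add0)
  hence "num B a \<preceq> \<zero>" using le_add_self2 by metis
  hence "num B a = \<zero>" using le_antisym zero_le by blast
  thus False using num_nz \<open>a \<noteq> 0\<close> by blast
qed

lemma RleT:
  assumes Oy: "Oy \<in> Os" and Oz: "Oz \<in> Os"
    and ha: "a \<noteq> 0 \<Longrightarrow> Oy \<noteq> \<zero>" and hc: "c \<noteq> 0 \<Longrightarrow> Oz \<noteq> \<zero>"
  shows "num B a \<otimes> Oz \<oplus> num B c \<otimes> Oy \<preceq> Oy \<otimes> Oz \<oplus> num B b \<otimes> Oz \<oplus> num B d \<otimes> Oy"
proof -
  have "num B a \<otimes> Oz \<oplus> num B c \<otimes> Oy \<preceq> Oy \<otimes> Oz"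
  proof (cases "a = 0")
    case True
    show ?thesis
    proof (cases "c = 0")
      case True thus ?thesis using \<open>a = 0\<close> by (simp add: mul0l add0 zero_le)
    next
      case False
      hence "num B c \<preceq> Oz" using Os_nonstd[OF Oz hc] R.less_imp_le by blast
      hence "num B c \<otimes> Oy \<preceq> Oz \<otimes> Oy" by (rule mul_le_mono)
      thus ?thesis using \<open>a = 0\<close> by (simp add: mul0l add0l mul_comm)
    qed
  next
    case False
    have aO: "num B a \<preceq> Oy" using Os_nonstd[OF Oy ha[OF False]] R.less_imp_le by blast
    show ?thesis
    proof (cases "c = 0")
      case True
      have "num B a \<otimes> Oz \<preceq> Oy \<otimes> Oz" using aO by (rule mul_le_mono)
      thus ?thesis using True by (simp add: mul0l add0)
    next
      case cF: False
      obtain u where u: "Oy = num B a \<oplus> u" using aO le_add_ex by blast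
      have cO: "num B c \<preceq> Oz" using Os_nonstd[OF Oz hc[OF cF]] R.less_imp_le by blast
      obtain v where v: "Oz = num B c \<oplus> v" using cO le_add_ex by blast
      have "\<not> standard B u"
      proof
        assume "standard B u"
        then obtain m where "u = num B m" unfolding standard_def by blast
        hence "standard B Oy" using u num_add unfolding standard_def by metis
        thus False using Os_std[OF Oy] ha[OF False] by blast
      qed
      hence cu: "num B c \<preceq> u" using nonstd_gt R.less_imp_le by blast
      have "\<not> standard B v"
      proof
        assume "standard B v"
        then obtain m where "v = num B m" unfolding standard_def by blast
        hence "standard B Oz" using v num_add unfolding standard_def by metis
        thus False using Os_std[OF Oz] hc[OF cF] by blast
      qed
      hence av: "num B a \<preceq> v" using nonstd_gt R.less_imp_le by blast
      have "num B c \<otimes> num B a \<preceq> u \<otimes> v" using mono_mul2[OF cu av] .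
      hence "(num B a \<otimes> num B c \<oplus> num B a \<otimes> v \<oplus> num B c \<otimes> u) \<oplus> num B c \<otimes> num B a
          \<preceq> (num B a \<otimes> num B c \<oplus> num B a \<otimes> v \<oplus> num B c \<otimes> u) \<oplus> u \<otimes> v"
        by (rule R.add_left_mono)
      thus ?thesis unfolding u v by (simp add: asimps)
    qed
  qed
  also have "\<dots> \<preceq> Oy \<otimes> Oz \<oplus> num B b \<otimes> Oz \<oplus> num B d \<otimes> Oy" using le_add_self R.order_trans add_assoc by metis
  finally show ?thesis .
qed


lemma rel_mul:
  assumes ry: "y \<oplus> nA = Oy \<oplus> nB" and rz: "z \<oplus> nC = Oz \<oplus> nD"
    and W: "W \<oplus> (nA \<otimes> Oz \<oplus> nC \<otimes> Oy) = Oy \<otimes> Oz \<oplus> nB \<otimes> Oz \<oplus> nD \<otimes> Oy"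
  shows "y \<otimes> z \<oplus> (nA \<otimes> nD \<oplus> nB \<otimes> nC) = W \<oplus> (nB \<otimes> nD \<oplus> nA \<otimes> nC)"
proof -
  have i: "(y \<oplus> nA) \<otimes> (z \<oplus> nC) = (Oy \<oplus> nB) \<otimes> (Oz \<oplus> nD)" using ry rz by simp
  have ii: "nC \<otimes> (y \<oplus> nA) = nC \<otimes> (Oy \<oplus> nB)" using ry by simp
  have iii: "nA \<otimes> (z \<oplus> nC) = nA \<otimes> (Oz \<oplus> nD)" using rz by simp
  define T where "T = nC \<otimes> y \<oplus> nA \<otimes> z \<oplus> nA \<otimes> nC \<oplus> nC \<otimes> nA"
  have "(y \<otimes> z \<oplus> (nA \<otimes> nD \<oplus> nB \<otimes> nC)) \<oplus> T = (y \<oplus> nA) \<otimes> (z \<oplus> nC) \<oplus> (nA \<otimes> nD \<oplus> nB \<otimes> nC \<oplus> nC \<otimes> nA)"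
    unfolding T_def by (simp add: asimps)
  also have "\<dots> = (Oy \<oplus> nB) \<otimes> (Oz \<oplus> nD) \<oplus> (nA \<otimes> nD \<oplus> nB \<otimes> nC \<oplus> nC \<otimes> nA)" by (simp only: i)
  also have "\<dots> = (Oy \<otimes> Oz \<oplus> nB \<otimes> Oz \<oplus> nD \<otimes> Oy) \<oplus> (nB \<otimes> nD \<oplus> nA \<otimes> nC) \<oplus> (nA \<otimes> nD \<oplus> nB \<otimes> nC)"
    by (simp add: asimps)
  also have "\<dots> = (W \<oplus> (nA \<otimes> Oz \<oplus> nC \<otimes> Oy)) \<oplus> (nB \<otimes> nD \<oplus> nA \<otimes> nC) \<oplus> (nA \<otimes> nD \<oplus> nB \<otimes> nC)"
    by (simp only: W)
  also have "\<dots> = (W \<oplus> (nB \<otimes> nD \<oplus> nA \<otimes> nC)) \<oplus> (nC \<otimes> (Oy \<oplus> nB) \<oplus> nA \<otimes> (Oz \<oplus> nD))"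
    by (simp add: asimps)
  also have "\<dots> = (W \<oplus> (nB \<otimes> nD \<oplus> nA \<otimes> nC)) \<oplus> (nC \<otimes> (y \<oplus> nA) \<oplus> nA \<otimes> (z \<oplus> nC))"
    by (simp only: ii iii)
  also have "\<dots> = (W \<oplus> (nB \<otimes> nD \<oplus> nA \<otimes> nC)) \<oplus> T" unfolding T_def by (simp add: asimps)
  finally show ?thesis by (rule add_cancel)
qed

lemma ext_mul_entry:
  assumes y: "y \<in> A" and z: "z \<in> A" and p: "primeB B p" and q: "primeB B q"
  shows "mmul B (Ee y) (Ee z) p q = Ee (y \<otimes> z) p q"
proof -
  define Oy where "Oy = Ob y"
  define Oz where "Oz = Ob z"
  have Oy: "Oy \<in> Os" and Oz: "Oz \<in> Os" unfolding Oy_def Oz_def using Ob_in y z by auto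
  obtain a b where rab: "rel y Oy a b" "a = 0 \<or> b = 0" using OO_rel y unfolding Oy_def by blast
  obtain c d where rcd: "rel z Oz c d" "c = 0 \<or> d = 0" using OO_rel z unfolding Oz_def by blast
  define M where "M = eps Oy"
  define N where "N = eps Oz"
  define E where "E = Ee y"
  define F where "F = Ee z"
  define nA where "nA = num B a"
  define nB where "nB = num B b"
  define nC where "nC = num B c"
  define nD where "nD = num B d"
  have gM: "good B M" and gN: "good B N" unfolding M_def N_def using eps_good Oy Oz by auto
  have gE: "good B E" and gF: "good B F" unfolding E_def F_def using ext_good y z by auto
  have Ed: "E r r \<oplus> nA = M r r \<oplus> nB" if "primeB B r" for r
    using G[OF y _ that] rab(1) unfolding E_def M_def nA_def nB_def Oy_def by blast
  have Eo: "E r r' = M r r'" if "\<not> (primeB B r \<and> r = r')" for r r'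
    using ext_off[OF that] unfolding E_def M_def Oy_def by blast
  have Fd: "F r r \<oplus> nC = N r r \<oplus> nD" if "primeB B r" for r
    using G[OF z _ that] rcd(1) unfolding F_def N_def nC_def nD_def Oz_def by blast
  have Fo: "F r r' = N r r'" if "\<not> (primeB B r \<and> r = r')" for r r'
    using ext_off[OF that] unfolding F_def N_def Oz_def by blast
  define T where "T = Oy \<otimes> Oz \<oplus> nB \<otimes> Oz \<oplus> nD \<otimes> Oy"
  define R where "R = nA \<otimes> Oz \<oplus> nC \<otimes> Oy"
  have nOs: "\<And>k Q. Q \<in> Os \<Longrightarrow> num B k \<otimes> Q \<in> Os" using numk_Os by blast
  have T: "T \<in> Os" unfolding T_def nB_def nD_def using Os_add Os_mul nOs Oy Oz by metis
  have R: "R \<in> Os" unfolding R_def nA_def nC_def using Os_add nOs Oy Oz by metis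
  have RT: "R \<preceq> T" unfolding R_def T_def nA_def nB_def nC_def nD_def
  proof (rule RleT[OF Oy Oz])
    show "a \<noteq> 0 \<Longrightarrow> Oy \<noteq> \<zero>" using rel_big[OF y] rab unfolding Oy_def by blast
    show "c \<noteq> 0 \<Longrightarrow> Oz \<noteq> \<zero>" using rel_big[OF z] rcd unfolding Oz_def by blast
  qed
  define W where "W = monus B T R"
  have W: "W \<in> Os" unfolding W_def using Os_monus T R by blast
  have WR: "W \<oplus> R = T" unfolding W_def using monus_add_inv[OF RT] .
  have yz: "y \<otimes> z \<in> A" using A_mul y z by blast
  have rW: "y \<otimes> z \<oplus> (nA \<otimes> nD \<oplus> nB \<otimes> nC) = W \<oplus> (nB \<otimes> nD \<oplus> nA \<otimes> nC)"
  proof (rule rel_mul)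
    show "y \<oplus> nA = Oy \<oplus> nB" using rab(1) unfolding rel_def nA_def nB_def .
    show "z \<oplus> nC = Oz \<oplus> nD" using rcd(1) unfolding rel_def nC_def nD_def .
    show "W \<oplus> (nA \<otimes> Oz \<oplus> nC \<otimes> Oy) = Oy \<otimes> Oz \<oplus> nB \<otimes> Oz \<oplus> nD \<otimes> Oy" using WR unfolding R_def T_def .
  qed
  have rW': "rel (y \<otimes> z) W (a * d + b * c) (b * d + a * c)"
    using rW unfolding rel_def nA_def nB_def nC_def nD_def by (simp add: num_add num_mult)
  have OW: "Ob (y \<otimes> z) = W" using Oof_eq[OF yz W rel_sim[OF rW']] .
  have h3: "eps W p q \<oplus> (nA \<otimes> N p q \<oplus> nC \<otimes> M p q) = mmul B M N p q \<oplus> nB \<otimes> N p q \<oplus> nD \<otimes> M p q"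
  proof -
    have eT: "eps T p q = mmul B M N p q \<oplus> nB \<otimes> N p q \<oplus> nD \<otimes> M p q"
    proof -
      have a1: "Oy \<otimes> Oz \<in> Os" "nB \<otimes> Oz \<in> Os" "nD \<otimes> Oy \<in> Os" "Oy \<otimes> Oz \<oplus> nB \<otimes> Oz \<in> Os"
        unfolding nB_def nD_def using Os_mul Os_add nOs Oy Oz by auto
      have "eps T p q = eps (Oy \<otimes> Oz) p q \<oplus> eps (nB \<otimes> Oz) p q \<oplus> eps (nD \<otimes> Oy) p q"
        unfolding T_def using eps_add a1 by simp
      thus ?thesis unfolding M_def N_def nB_def nD_def using eps_mul Oy Oz numk_Os by simp
    qed
    have eR: "eps R p q = nA \<otimes> N p q \<oplus> nC \<otimes> M p q"
    proof -
      have a1: "nA \<otimes> Oz \<in> Os" "nC \<otimes> Oy \<in> Os" unfolding nA_def nC_def using nOs Oy Oz by auto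
      have "eps R p q = eps (nA \<otimes> Oz) p q \<oplus> eps (nC \<otimes> Oy) p q" unfolding R_def using eps_add a1 by simp
      thus ?thesis unfolding M_def N_def nA_def nC_def using numk_Os Oy Oz by simp
    qed
    have "eps T p q = eps W p q \<oplus> eps R p q" using eps_add[OF W R] WR by simp
    thus ?thesis using eT eR by simp
  qed
  obtain KF where KF: "\<forall>r. F r q \<noteq> \<zero> \<longrightarrow> r \<prec> KF" using col_support[OF gF] by blast
  obtain KN where KN: "\<forall>r. N r q \<noteq> \<zero> \<longrightarrow> r \<prec> KN" using col_support[OF gN] by blast
  define K where "K = (KF \<oplus> KN) \<oplus> (p \<oplus> q) \<oplus> \<one>"
  have KF': "KF \<preceq> K" "KN \<preceq> K" unfolding K_def using le_add_self le_add_self2 R.order_trans by meson+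
  have pq': "p \<prec> K" "q \<prec> K"
  proof -
    have "p \<preceq> (KF \<oplus> KN) \<oplus> (p \<oplus> q)" "q \<preceq> (KF \<oplus> KN) \<oplus> (p \<oplus> q)"
      using le_add_self le_add_self2 R.order_trans by meson+
    thus "p \<prec> K" "q \<prec> K" unfolding K_def using le_lt_succ by blast+
  qed
  have suppF: "\<forall>r. F r q \<noteq> \<zero> \<longrightarrow> r \<prec> K" using KF KF' R.less_le_trans by blast
  have suppN: "\<forall>r. N r q \<noteq> \<zero> \<longrightarrow> r \<prec> K" using KN KF' R.less_le_trans by blast
  obtain sEF where sEF: "bsum B (gXY E F p q) K sEF" using mmul_exists[OF gE gF q] by blast
  obtain sMF where sMF: "bsum B (gXY M F p q) K sMF" using mmul_exists[OF gM gF q] by blast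
  obtain sMN where sMN: "bsum B (gXY M N p q) K sMN" using mmul_exists[OF gM gN q] by blast
  have X: "mmul B E F p q = sEF" using mmul_char[OF p q suppF sEF] .
  have XMN: "mmul B M N p q = sMN" using mmul_char[OF p q suppN sMN] .
  have Eo': "\<And>r. r \<noteq> p \<Longrightarrow> E p r = M p r" using Eo by simp
  have Fo': "\<And>r. r \<noteq> q \<Longrightarrow> F r q = N r q" using Fo by simp
  have h1: "sEF \<oplus> nA \<otimes> F p q = sMF \<oplus> nB \<otimes> F p q"
    by (rule perturb_row[OF p pq'(1) Ed[OF p] Eo' sEF sMF])
  have h2: "sMF \<oplus> M p q \<otimes> nC = sMN \<oplus> M p q \<otimes> nD"
    by (rule perturb_col[OF q pq'(2) Fd[OF q] Fo' sMF sMN])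
  have S1: "sEF \<oplus> nA \<otimes> F p q \<oplus> nC \<otimes> M p q = sMN \<oplus> nD \<otimes> M p q \<oplus> nB \<otimes> F p q"
  proof -
    have "sEF \<oplus> nA \<otimes> F p q \<oplus> nC \<otimes> M p q = (sMF \<oplus> nB \<otimes> F p q) \<oplus> nC \<otimes> M p q" by (simp only: h1)
    also have "\<dots> = (sMF \<oplus> M p q \<otimes> nC) \<oplus> nB \<otimes> F p q" by (simp add: asimps)
    also have "\<dots> = (sMN \<oplus> M p q \<otimes> nD) \<oplus> nB \<otimes> F p q" by (simp only: h2)
    finally show ?thesis by (simp add: asimps)
  qed
  show ?thesis
  proof (cases "p = q")
    case False
    have FN: "F p q = N p q" using Fo False by blast
    have EW: "Ee (y \<otimes> z) p q = eps W p q" using ext_off[of p q] False OW by simp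
    have "sEF \<oplus> (nA \<otimes> N p q \<oplus> nC \<otimes> M p q) = sMN \<oplus> nB \<otimes> N p q \<oplus> nD \<otimes> M p q"
      using S1 FN by (simp add: asimps)
    also have "\<dots> = eps W p q \<oplus> (nA \<otimes> N p q \<oplus> nC \<otimes> M p q)" using h3 XMN by simp
    finally have "sEF = eps W p q" by (rule add_cancel)
    thus ?thesis using X EW unfolding E_def F_def by simp
  next
    case True
    hence qp: "q = p" by simp
    have h5: "F p p \<oplus> nC = N p p \<oplus> nD" using Fd[OF p] .
    have h4: "Ee (y \<otimes> z) p p \<oplus> (nA \<otimes> nD \<oplus> nB \<otimes> nC) = eps W p p \<oplus> (nB \<otimes> nD \<oplus> nA \<otimes> nC)"
    proof -
      have "rel (y \<otimes> z) (Ob (y \<otimes> z)) (a * d + b * c) (b * d + a * c)" using rW' OW by simp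
      from G[OF yz this p] show ?thesis using OW unfolding nA_def nB_def nC_def nD_def by (simp add: num_add num_mult)
    qed
    have S1': "sEF \<oplus> nA \<otimes> F p p \<oplus> nC \<otimes> M p p = sMN \<oplus> nD \<otimes> M p p \<oplus> nB \<otimes> F p p" using S1 qp by simp
    have h3': "eps W p p \<oplus> (nA \<otimes> N p p \<oplus> nC \<otimes> M p p) = sMN \<oplus> nB \<otimes> N p p \<oplus> nD \<otimes> M p p"
      using h3 XMN qp by simp
    have "(sEF \<oplus> (nA \<otimes> nD \<oplus> nB \<otimes> nC)) \<oplus> (nA \<otimes> N p p \<oplus> nC \<otimes> M p p)
        = (sEF \<oplus> nA \<otimes> (N p p \<oplus> nD) \<oplus> nC \<otimes> M p p) \<oplus> nB \<otimes> nC" by (simp add: asimps)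
    also have "\<dots> = (sEF \<oplus> nA \<otimes> (F p p \<oplus> nC) \<oplus> nC \<otimes> M p p) \<oplus> nB \<otimes> nC" by (simp only: h5)
    also have "\<dots> = (sEF \<oplus> nA \<otimes> F p p \<oplus> nC \<otimes> M p p) \<oplus> (nA \<otimes> nC \<oplus> nB \<otimes> nC)" by (simp add: asimps)
    also have "\<dots> = (sMN \<oplus> nD \<otimes> M p p \<oplus> nB \<otimes> F p p) \<oplus> (nA \<otimes> nC \<oplus> nB \<otimes> nC)" by (simp only: S1')
    also have "\<dots> = (sMN \<oplus> nD \<otimes> M p p \<oplus> nB \<otimes> (F p p \<oplus> nC)) \<oplus> nA \<otimes> nC" by (simp add: asimps)
    also have "\<dots> = (sMN \<oplus> nD \<otimes> M p p \<oplus> nB \<otimes> (N p p \<oplus> nD)) \<oplus> nA \<otimes> nC" by (simp only: h5)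
    also have "\<dots> = (sMN \<oplus> nB \<otimes> N p p \<oplus> nD \<otimes> M p p) \<oplus> (nB \<otimes> nD \<oplus> nA \<otimes> nC)" by (simp add: asimps)
    also have "\<dots> = (eps W p p \<oplus> (nA \<otimes> N p p \<oplus> nC \<otimes> M p p)) \<oplus> (nB \<otimes> nD \<oplus> nA \<otimes> nC)" by (simp only: h3')
    also have "\<dots> = (eps W p p \<oplus> (nB \<otimes> nD \<oplus> nA \<otimes> nC)) \<oplus> (nA \<otimes> N p p \<oplus> nC \<otimes> M p p)" by (simp add: asimps)
    finally have "sEF \<oplus> (nA \<otimes> nD \<oplus> nB \<otimes> nC) = eps W p p \<oplus> (nB \<otimes> nD \<oplus> nA \<otimes> nC)" by (rule add_cancel)
    also have "\<dots> = Ee (y \<otimes> z) p p \<oplus> (nA \<otimes> nD \<oplus> nB \<otimes> nC)" using h4 by simp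
    finally have "sEF = Ee (y \<otimes> z) p p" by (rule add_cancel)
    thus ?thesis using X qp unfolding E_def F_def by simp
  qed
qed

lemma ext_mul: "y \<in> A \<Longrightarrow> z \<in> A \<Longrightarrow> Ee (y \<otimes> z) = mmul B (Ee y) (Ee z)"
proof (intro ext)
  fix p q assume y: "y \<in> A" and z: "z \<in> A"
  show "Ee (y \<otimes> z) p q = mmul B (Ee y) (Ee z) p q"
  proof (cases "primeB B p \<and> primeB B q")
    case True thus ?thesis using ext_mul_entry[OF y z] by simp
  next
    case False
    hence "Ee (y \<otimes> z) p q = \<zero>" using ext_zero A_mul y z by blast
    moreover have "mmul B (Ee y) (Ee z) p q = \<zero>" unfolding mmul_def using False by auto
    ultimately show ?thesis by simp
  qed
qed

theorem main:
  "(\<forall>y\<in>A. good B (Ee y)) \<and> Ee \<zero> = mzero B \<and> Ee \<one> = mid B \<and>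
   (\<forall>y\<in>A. \<forall>z\<in>A. Ee (y \<oplus> z) = madd B (Ee y) (Ee z) \<and> Ee (y \<otimes> z) = mmul B (Ee y) (Ee z))"
  using ext_good ext0 ext1 ext_add ext_mul by blast

end

theorem lemma3p6:
  fixes B :: "'b Lstr" and A Os :: "'b set" and eps :: "'b \<Rightarrow> 'b mat"
  assumes "ISigma1 B"
    and "substr B A"
    and "Os \<subseteq> A"
    and "zer B \<in> Os"
    and "\<forall>x\<in>Os. \<forall>y\<in>Os. ad B x y \<in> Os \<and> monus B x y \<in> Os \<and> mu B x y \<in> Os"
    and "\<forall>y\<in>A. \<exists>!w. w \<in> Os \<and> simB B y w"
    and "\<forall>Q\<in>Os. good B (eps Q)"
    and "eps (zer B) = mzero B"
    and "\<forall>Q\<in>Os. \<forall>R\<in>Os. eps (ad B Q R) = madd B (eps Q) (eps R)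
                      \<and> eps (monus B Q R) = mmonus B (eps Q) (eps R)
                      \<and> eps (mu B Q R) = mmul B (eps Q) (eps R)"
    and "\<forall>Q\<in>Os. Q \<noteq> zer B \<longrightarrow> (\<forall>p. primeB B p \<longrightarrow> \<not> standard B (eps Q p p))"
  shows "(\<forall>y\<in>A. good B (ext_eps B Os eps y))
       \<and> ext_eps B Os eps (zer B) = mzero B
       \<and> ext_eps B Os eps (on B) = mid B
       \<and> (\<forall>y\<in>A. \<forall>z\<in>A.
            ext_eps B Os eps (ad B y z) = madd B (ext_eps B Os eps y) (ext_eps B Os eps z)
          \<and> ext_eps B Os eps (mu B y z) = mmul B (ext_eps B Os eps y) (ext_eps B Os eps z))"
proof (cases "\<exists>p. primeB B p")
  case True
  then obtain p where "primeB B p" by blast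
  hence "lt B (on B) p" unfolding primeB_def by blast
  hence ISB: "IS B" using assms(1) by (intro IS.intro) blast+
  have "Setup B A Os eps"
    by (rule Setup.intro[OF ISB], unfold Setup_axioms_def) (use assms in blast)
  thus ?thesis by (rule Setup.main)
next
  case False
  have PA: "PAminus B" using assms(1) unfolding ISigma1_def by blast
  have ez: "ext_eps B Os eps y = mzero B" if y: "y \<in> A" for y
  proof -
    have w: "Oof B Os y \<in> Os" unfolding Oof_def using theI'[OF assms(6)[rule_format, OF y]] by blast
    hence g: "good B (eps (Oof B Os y))" using assms(7) by blast
    show ?thesis unfolding ext_eps_def Let_def mzero_def
      using False g unfolding good_def by auto
  qed
  have nlt: "\<not> lt B i (zer B)" for i using PAx9[OF PA] PAx16[OF PA] unfolding lt_def by blast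
  have cod: "coded B {}" unfolding coded_def using nlt by blast
  have gz: "good B (mzero B)" unfolding good_def mzero_def using False cod by auto
  have A0: "zer B \<in> A" and A1: "on B \<in> A" using assms(2) unfolding substr_def by auto
  have mid0: "mid B = mzero B" unfolding mid_def mzero_def using False by auto
  have madd0: "madd B (mzero B) (mzero B) = mzero B" unfolding madd_def mzero_def using PAx5[OF PA] by simp
  have mmul0: "mmul B X Y = mzero B" for X Y unfolding mmul_def mzero_def using False by auto
  have sA: "ad B y z \<in> A" "mu B y z \<in> A" if "y \<in> A" "z \<in> A" for y z
    using assms(2) that unfolding substr_def by auto
  show ?thesis using ez gz A0 A1 mid0 madd0 mmul0 sA by simp
qed

end
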